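(* Let $T$ be a nonempty rooted tree, $G=U(T)$ its underlying graph, and $U\colon X^T\to X^G$ the simplicial map sending $(F;L_0\supseteq\cdots\supseteq L_n)$ to $(U(F);L_0\setminus L_1,\dots,L_{n-1}\setminus L_n)$. Then: (1) if $T$ is labelled, $U$ is CULF if and only if $T$ has exactly one vertex; (2) if $T$ is unlabelled (planar or non-planar), $U$ is CULF if and only if $T$ has at most one edge.
   Context: Rooted trees and $X^T$: A rooted tree $T$ is a finite tree with a distinguished root vertex; its vertex set is partially ordered by $v\le w$ iff $v$ lies on the path from the root to $w$; a planar rooted tree additionally carries a total order on the upward edges at each vertex. A rooted forest is a disjoint union of rooted trees. For a vertex subset $S$, the subforest spanned by $S$ ($H|_S$) has vertex set $S$, the edges with both endpoints in $S$, and the induced structure. A subset $L$ defines a lower subforest if $w\in L$, $v\le w$ imply $v\in L$. For $n\ge1$ a layering of $n-1$ cuts of a forest $F$ is a chain $V(F)=L_0\supseteq\cdots\supseteq L_n=\varnothing$ of subsets each defining a lower subforest. An admissible subforest of $T$ is the subforest spanned by $L_i\setminus L_j$ ($i\le j$) for a layering of $T$. $X^T_0$ is a point; $X^T_n$ ($n\ge1$) is the set of pairs $(H;L_0\supseteq\cdots\supseteq L_n)$ with $H$ admissible and $L_\bullet$ a layering of $H$; for $n\ge2$, $d_0(H;L_\bullet)=(H|_{L_1};L_1\supseteq\cdots\supseteq L_n)$, $d_n(H;L_\bullet)=(H|_{L_0\setminus L_{n-1}};L_0\setminus L_{n-1}\supseteq\cdots\supseteq L_{n-1}\setminus L_{n-1})$,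 $d_i$ ($0<i<n$) deletes $L_i$, and $s_i$ repeats $L_i$. In the labelled version vertices are distinguishable; in the unlabelled versions one takes isomorphism classes of such pairs under isomorphisms of rooted forests (planar-structure preserving in the planar case) carrying each $L_i$ onto $L'_i$. Graphs and $X^G$: For a finite graph $G$, a subgraph is a vertex subset with a set of edges having endpoints in it. $X^G_0=\{\varnothing\}$; $X^G_1$ is the set of subgraphs of $G$; $X^G_n$ ($n\ge1$) is the set of tuples $(H;S_1,\dots,S_n)$ with $H$ a subgraph and $S_1,\dots,S_n$ a partition of $V(H)$ into possibly empty disjoint sets; $d_0$ and $d_n$ delete $S_1$, resp. $S_n$, together with these vertices and incident edges from $H$; $d_i$ ($1\le i\le n-1$) merges $S_i$ and $S_{i+1}$; $s_i$ inserts $\varnothing$ after $S_i$. For unlabelled $G$ one takes isomorphism classes of tuples under graph isomorphisms preserving the parts. A map of simplicial sets $f\colon X\to Y$ is CULF (conservative with unique lifting of factorizations) if for all $n$ the commutative squares formed by $f_n,f_{n+1}$ and the degeneracies $s_j\colon X_n\to X_{n+1}$, $s_j\colon Y_n\to Y_{n+1}$ ($0\le j\le n$), and those formed by $f_n,f_{n-1}$ and the inner faces $d_i$ ($0<i<n$), are pullbacks of sets. *)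

theory Defs
  imports Main
begin

text \<open>A commutative square of sets
   A --g--> B
   |h       |k
   C --l--> D
 is a pullback iff it commutes and A maps bijectively onto the set-theoretic
 fibre product of B and C over D.\<close>
definition pullback_sq ::
  "'a set \<Rightarrow> 'b set \<Rightarrow> 'c set \<Rightarrow> ('a \<Rightarrow> 'b) \<Rightarrow> ('a \<Rightarrow> 'c) \<Rightarrow> ('b \<Rightarrow> 'd) \<Rightarrow> ('c \<Rightarrow> 'd) \<Rightarrow> bool"
  where "pullback_sq A B C g h k l \<longleftrightarrow>
     g ` A \<subseteq> B \<and> h ` A \<subseteq> C \<and> (\<forall>a\<in>A. k (g a) = l (h a)) \<and>
     (\<forall>b\<in>B. \<forall>c\<in>C. k b = l c \<longrightarrow> (\<exists>!a. a \<in> A \<and> g a = b \<and> h a = c))"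

text \<open>Simplicial data: levels X n, faces d n i : X n -> X (n-1),
 degeneracies s n j : X n -> X (n+1); a map f with components f n.
 CULF: degeneracy squares and inner-face squares are pullbacks.\<close>
definition culf ::
  "(nat \<Rightarrow> 'a set) \<Rightarrow> (nat \<Rightarrow> nat \<Rightarrow> 'a \<Rightarrow> 'a) \<Rightarrow> (nat \<Rightarrow> nat \<Rightarrow> 'a \<Rightarrow> 'a) \<Rightarrow>
   (nat \<Rightarrow> 'b set) \<Rightarrow> (nat \<Rightarrow> nat \<Rightarrow> 'b \<Rightarrow> 'b) \<Rightarrow> (nat \<Rightarrow> nat \<Rightarrow> 'b \<Rightarrow> 'b) \<Rightarrow>
   (nat \<Rightarrow> 'a \<Rightarrow> 'b) \<Rightarrow> bool"
  where "culf X dX sX Y dY sY f \<longleftrightarrow>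
     (\<forall>n j. j \<le> n \<longrightarrow>
        pullback_sq (X n) (X (Suc n)) (Y n) (sX n j) (f n) (f (Suc n)) (sY n j)) \<and>
     (\<forall>n i. 0 < i \<and> i < n \<longrightarrow>
        pullback_sq (X n) (X (n - 1)) (Y n) (dX n i) (f n) (f (n - 1)) (dY n i))"

definition qclass :: "'a set \<Rightarrow> ('a \<Rightarrow> 'a \<Rightarrow> bool) \<Rightarrow> 'a \<Rightarrow> 'a set"
  where "qclass A R x = {y \<in> A. R x y}"

definition qrep :: "'a set \<Rightarrow> 'a" where "qrep C = (SOME x. x \<in> C)"

definition qlevels :: "(nat \<Rightarrow> 'a set) \<Rightarrow> (nat \<Rightarrow> 'a \<Rightarrow> 'a \<Rightarrow> bool) \<Rightarrow> nat \<Rightarrow> 'a set set"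
  where "qlevels X R n = qclass (X n) (R n) ` X n"

definition qface ::
  "(nat \<Rightarrow> 'a set) \<Rightarrow> (nat \<Rightarrow> 'a \<Rightarrow> 'a \<Rightarrow> bool) \<Rightarrow> (nat \<Rightarrow> nat \<Rightarrow> 'a \<Rightarrow> 'a) \<Rightarrow> nat \<Rightarrow> nat \<Rightarrow> 'a set \<Rightarrow> 'a set"
  where "qface X R d n i C = qclass (X (n - 1)) (R (n - 1)) (d n i (qrep C))"

definition qdegen ::
  "(nat \<Rightarrow> 'a set) \<Rightarrow> (nat \<Rightarrow> 'a \<Rightarrow> 'a \<Rightarrow> bool) \<Rightarrow> (nat \<Rightarrow> nat \<Rightarrow> 'a \<Rightarrow> 'a) \<Rightarrow> nat \<Rightarrow> nat \<Rightarrow> 'a set \<Rightarrow> 'a set"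
  where "qdegen X R s n j C = qclass (X (Suc n)) (R (Suc n)) (s n j (qrep C))"

definition qmap ::
  "(nat \<Rightarrow> 'b set) \<Rightarrow> (nat \<Rightarrow> 'b \<Rightarrow> 'b \<Rightarrow> bool) \<Rightarrow> (nat \<Rightarrow> 'a \<Rightarrow> 'b) \<Rightarrow> nat \<Rightarrow> 'a set \<Rightarrow> 'b set"
  where "qmap Y RY f n C = qclass (Y n) (RY n) (f n (qrep C))"

text \<open>A rooted tree: finite vertex set V, root r, set E of directed edges
 (parent, child).\<close>
definition rooted_tree :: "'v set \<Rightarrow> 'v \<Rightarrow> ('v \<times> 'v) set \<Rightarrow> bool"
  where "rooted_tree V r E \<longleftrightarrow> finite V \<and> r \<in> V \<and> E \<subseteq> V \<times> V \<and>
     (\<forall>p. (p, r) \<notin> E) \<and> (\<forall>c \<in> V - {r}. \<exists>!p. (p, c) \<in> E) \<and>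
     (\<forall>v \<in> V. (r, v) \<in> E\<^sup>*)"

definition planar_structure :: "'v set \<Rightarrow> ('v \<times> 'v) set \<Rightarrow> ('v \<Rightarrow> 'v \<Rightarrow> bool) \<Rightarrow> bool"
  where "planar_structure V E P \<longleftrightarrow> (\<forall>p \<in> V.
     (\<forall>a. (p, a) \<in> E \<longrightarrow> \<not> P a a) \<and>
     (\<forall>a b c. (p, a) \<in> E \<and> (p, b) \<in> E \<and> (p, c) \<in> E \<and> P a b \<and> P b c \<longrightarrow> P a c) \<and>
     (\<forall>a b. (p, a) \<in> E \<and> (p, b) \<in> E \<and> a \<noteq> b \<longrightarrow> P a b \<or> P b a))"

text \<open>Subforest spanned by S: vertices S, edges E \<inter> S \<times> S; its order is
 reachability along these edges. L defines a lower subforest of it.\<close>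
definition lower :: "('v \<times> 'v) set \<Rightarrow> 'v set \<Rightarrow> 'v set \<Rightarrow> bool"
  where "lower E S L \<longleftrightarrow> L \<subseteq> S \<and>
     (\<forall>w \<in> L. \<forall>v. (v, w) \<in> (E \<inter> S \<times> S)\<^sup>* \<longrightarrow> v \<in> L)"

text \<open>A layering L_0 \<supseteq> ... \<supseteq> L_n of the subforest spanned by S, as a list
 of length n+1.\<close>
definition layering :: "('v \<times> 'v) set \<Rightarrow> 'v set \<Rightarrow> 'v set list \<Rightarrow> bool"
  where "layering E S Ls \<longleftrightarrow> Ls \<noteq> [] \<and> hd Ls = S \<and> last Ls = {} \<and>
     (\<forall>k. Suc k < length Ls \<longrightarrow> Ls ! Suc k \<subseteq> Ls ! k) \<and>
     (\<forall>k < length Ls. lower E S (Ls ! k))"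

definition admissible :: "'v set \<Rightarrow> ('v \<times> 'v) set \<Rightarrow> 'v set \<Rightarrow> bool"
  where "admissible V E A \<longleftrightarrow> (\<exists>Ls i j. 2 \<le> length Ls \<and> layering E V Ls \<and>
     i \<le> j \<and> j < length Ls \<and> A = Ls ! i - Ls ! j)"

text \<open>Labelled X^T: the level n consists of layerings (lists of length n+1)
 of admissible subforests; the subforest H is determined by its vertex set
 L_0. Level 0 is the single point [{}].\<close>
definition XT :: "'v set \<Rightarrow> ('v \<times> 'v) set \<Rightarrow> nat \<Rightarrow> 'v set list set"
  where "XT V E n = {Ls. length Ls = Suc n \<and> admissible V E (hd Ls) \<and> layering E (hd Ls) Ls}"

definition T_face :: "nat \<Rightarrow> nat \<Rightarrow> 'v set list \<Rightarrow> 'v set list"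
  where "T_face n i Ls = take i Ls @ drop (Suc i) Ls"

definition T_degen :: "nat \<Rightarrow> nat \<Rightarrow> 'v set list \<Rightarrow> 'v set list"
  where "T_degen n j Ls = take (Suc j) Ls @ drop j Ls"

definition isoT :: "bool \<Rightarrow> ('v \<Rightarrow> 'v \<Rightarrow> bool) \<Rightarrow> ('v \<times> 'v) set \<Rightarrow> nat \<Rightarrow> 'v set list \<Rightarrow> 'v set list \<Rightarrow> bool"
  where "isoT pl P E n Ls Ls' \<longleftrightarrow> length Ls = length Ls' \<and>
     (\<exists>\<phi>. bij_betw \<phi> (hd Ls) (hd Ls') \<and>
        (\<forall>a \<in> hd Ls. \<forall>b \<in> hd Ls. (a, b) \<in> E \<longleftrightarrow> (\<phi> a, \<phi> b) \<in> E) \<and>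
        (\<forall>k < length Ls. \<phi> ` (Ls ! k) = Ls' ! k) \<and>
        (pl \<longrightarrow> (\<forall>c \<in> hd Ls. \<forall>a \<in> hd Ls. \<forall>b \<in> hd Ls.
            (c, a) \<in> E \<and> (c, b) \<in> E \<longrightarrow> (P a b \<longleftrightarrow> P (\<phi> a) (\<phi> b)))))"

definition Gedges :: "('v \<times> 'v) set \<Rightarrow> 'v set set"
  where "Gedges E = {{p, c} | p c. (p, c) \<in> E}"

text \<open>An element (H; S_1,...,S_n) is represented as (F, [S_1,...,S_n]) where
 F is the edge set of H and V(H) is the union of the S_k.\<close>
definition XG :: "'v set \<Rightarrow> ('v \<times> 'v) set \<Rightarrow> nat \<Rightarrow> ('v set set \<times> 'v set list) set"
  where "XG V E n = {(F, Ss). length Ss = n \<and> \<Union> (set Ss) \<subseteq> V \<and>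
     (\<forall>k < n. \<forall>l < n. k \<noteq> l \<longrightarrow> Ss ! k \<inter> Ss ! l = {}) \<and>
     F \<subseteq> {e \<in> Gedges E. e \<subseteq> \<Union> (set Ss)}}"

text \<open>Inner face d_i (1 \<le> i \<le> n-1) merges S_i and S_(i+1); s_j inserts the
 empty set after S_j.\<close>
definition G_face :: "nat \<Rightarrow> nat \<Rightarrow> 'v set set \<times> 'v set list \<Rightarrow> 'v set set \<times> 'v set list"
  where "G_face n i x = (case x of (F, Ss) \<Rightarrow>
     (F, take (i - 1) Ss @ [Ss ! (i - 1) \<union> Ss ! i] @ drop (Suc i) Ss))"

definition G_degen :: "nat \<Rightarrow> nat \<Rightarrow> 'v set set \<times> 'v set list \<Rightarrow> 'v set set \<times> 'v set list"
  where "G_degen n j x = (case x of (F, Ss) \<Rightarrow> (F, take j Ss @ [{}] @ drop j Ss))"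

definition isoG :: "nat \<Rightarrow> 'v set set \<times> 'v set list \<Rightarrow> 'v set set \<times> 'v set list \<Rightarrow> bool"
  where "isoG n x y \<longleftrightarrow> (case x of (F, Ss) \<Rightarrow> case y of (F', Ss') \<Rightarrow>
     length Ss = length Ss' \<and>
     (\<exists>\<phi>. bij_betw \<phi> (\<Union> (set Ss)) (\<Union> (set Ss')) \<and>
        (\<lambda>e. \<phi> ` e) ` F = F' \<and>
        (\<forall>k < length Ss. \<phi> ` (Ss ! k) = Ss' ! k)))"

definition Umap :: "('v \<times> 'v) set \<Rightarrow> nat \<Rightarrow> 'v set list \<Rightarrow> 'v set set \<times> 'v set list"
  where "Umap E n Ls = ({e \<in> Gedges E. e \<subseteq> hd Ls}, map (\<lambda>k. Ls ! k - Ls ! Suc k) [0..<n])"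

definition U_culf_labelled :: "'v set \<Rightarrow> ('v \<times> 'v) set \<Rightarrow> bool"
  where "U_culf_labelled V E \<longleftrightarrow>
     culf (XT V E) T_face T_degen (XG V E) G_face G_degen (Umap E)"

text \<open>Unlabelled: pl = False is the non-planar case, pl = True the planar one
 (with planar structure P).\<close>
definition U_culf_unlabelled :: "bool \<Rightarrow> ('v \<Rightarrow> 'v \<Rightarrow> bool) \<Rightarrow> 'v set \<Rightarrow> ('v \<times> 'v) set \<Rightarrow> bool"
  where "U_culf_unlabelled pl P V E \<longleftrightarrow>
     culf (qlevels (XT V E) (isoT pl P E))
          (qface (XT V E) (isoT pl P E) T_face) (qdegen (XT V E) (isoT pl P E) T_degen)
          (qlevels (XG V E) isoG)
          (qface (XG V E) isoG G_face) (qdegen (XG V E) isoG G_degen)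
          (qmap (XG V E) isoG (Umap E))"

end

theory Submission
  imports Defs
begin



lemma nth_del: "i < length xs \<Longrightarrow> k < length xs - 1 \<Longrightarrow>
   (take i xs @ drop (Suc i) xs) ! k = xs ! (if k < i then k else Suc k)"
  by (auto simp: nth_append min_def)

lemma len_del: "i < length xs \<Longrightarrow> length (take i xs @ drop (Suc i) xs) = length xs - 1"
  by auto

lemma nth_dup: "j < length xs \<Longrightarrow> k \<le> length xs \<Longrightarrow>
   (take (Suc j) xs @ drop j xs) ! k = xs ! (if k \<le> j then k else k - 1)"
  by (auto simp: nth_append min_def intro!: arg_cong[where f="(!) xs"])

lemma nth_merge: "0 < i \<Longrightarrow> i < length xs \<Longrightarrow> k < length xs - 1 \<Longrightarrow>
   (take (i - 1) xs @ [z] @ drop (Suc i) xs) ! k =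
     (if k < i - 1 then xs ! k else if k = i - 1 then z else xs ! Suc k)"
  by (auto simp: nth_append min_def)

lemma nth_ins: "j \<le> length xs \<Longrightarrow> k \<le> length xs \<Longrightarrow>
   (take j xs @ [z] @ drop j xs) ! k =
     (if k < j then xs ! k else if k = j then z else xs ! (k - 1))"
  by (auto simp: nth_append min_def)




section \<open>Tree facts\<close>

lemma rt_noin: "rooted_tree V r E \<Longrightarrow> (p, r) \<notin> E"
  by (simp add: rooted_tree_def)

lemma rt_sub: "rooted_tree V r E \<Longrightarrow> (a, b) \<in> E \<Longrightarrow> a \<in> V \<and> b \<in> V"
  unfolding rooted_tree_def by blast

lemma rt_uniq: "rooted_tree V r E \<Longrightarrow> (p, c) \<in> E \<Longrightarrow> (q, c) \<in> E \<Longrightarrow> p = q"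
proof -
  assume t: "rooted_tree V r E" and a: "(p, c) \<in> E" "(q, c) \<in> E"
  have "c \<in> V - {r}" using rt_sub[OF t a(1)] rt_noin[OF t, of p] a by auto
  then have "\<exists>!p. (p, c) \<in> E" using t unfolding rooted_tree_def by blast
  then show ?thesis using a by blast
qed

lemma rt_reach: "rooted_tree V r E \<Longrightarrow> v \<in> V \<Longrightarrow> (r, v) \<in> E\<^sup>*"
  unfolding rooted_tree_def by blast

lemma rt_to_root: "rooted_tree V r E \<Longrightarrow> (v, r) \<in> E\<^sup>* \<Longrightarrow> v = r"
  by (erule rtranclE) (auto dest: rt_noin)

lemma rt_acyc_aux:
  assumes t: "rooted_tree V r E" and h: "(r, w) \<in> E\<^sup>*"
  shows "(w, w) \<notin> E\<^sup>+"
  using h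
proof (induction rule: rtrancl_induct)
  case base
  then show ?case using tranclD2[of r r E] rt_noin[OF t] by blast
next
  case (step u w)
  show ?case
  proof
    assume "(w, w) \<in> E\<^sup>+"
    then obtain x where x: "(w, x) \<in> E\<^sup>*" "(x, w) \<in> E" using tranclD2 by metis
    from rt_uniq[OF t x(2) step.hyps(2)] have "x = u" .
    with x step.hyps(2) have "(u, u) \<in> E\<^sup>+" by (meson rtrancl_into_trancl2)
    with step.IH show False by blast
  qed
qed

lemma rt_acyc: "rooted_tree V r E \<Longrightarrow> v \<in> V \<Longrightarrow> (v, v) \<notin> E\<^sup>+"
  using rt_acyc_aux[of V r E v] rt_reach[of V r E v] by simp

lemma rt_acyc': "rooted_tree V r E \<Longrightarrow> (v, v) \<notin> E\<^sup>+"
proof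
  assume t: "rooted_tree V r E" and "(v, v) \<in> E\<^sup>+"
  then obtain x where "(v, x) \<in> E" using tranclD[of v v E] converse_rtranclE by blast
  then have "v \<in> V" using rt_sub[OF t] by blast
  then show False using rt_acyc[OF t] \<open>(v, v) \<in> E\<^sup>+\<close> by blast
qed

lemma rt_noloop: "rooted_tree V r E \<Longrightarrow> (v, v) \<notin> E"
  using rt_acyc'[of V r E v] r_into_trancl[of v v E] by auto

lemma rt_antisym: "rooted_tree V r E \<Longrightarrow> (a, b) \<in> E\<^sup>* \<Longrightarrow> (b, a) \<in> E\<^sup>* \<Longrightarrow> a = b"
proof (rule ccontr)
  assume t: "rooted_tree V r E" and ab: "(a, b) \<in> E\<^sup>*" "(b, a) \<in> E\<^sup>*" and ne: "a \<noteq> b"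
  from ab(1) ne have "(a, b) \<in> E\<^sup>+" by (simp add: rtrancl_eq_or_trancl)
  then have "(a, a) \<in> E\<^sup>+" using ab(2) by (rule trancl_rtrancl_trancl)
  with rt_acyc'[OF t] show False by blast
qed

lemma rt_parent_anc: "rooted_tree V r E \<Longrightarrow> (v, w) \<in> E\<^sup>* \<Longrightarrow> (q, w) \<in> E \<Longrightarrow> v = w \<or> (v, q) \<in> E\<^sup>*"
proof -
  assume t: "rooted_tree V r E" and h: "(v, w) \<in> E\<^sup>*" and q: "(q, w) \<in> E"
  from h show ?thesis
  proof (cases rule: rtranclE)
    case (step y)
    then have "y = q" using rt_uniq[OF t step(2) q] by simp
    then show ?thesis using step by simp
  qed simp
qed

lemma rt_finite: "rooted_tree V r E \<Longrightarrow> finite V"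
  by (simp add: rooted_tree_def)

lemma rt_EV: "rooted_tree V r E \<Longrightarrow> E \<subseteq> V \<times> V"
  by (simp add: rooted_tree_def)

section \<open>Layerings\<close>

lemma lower_self: "lower E S S"
  unfolding lower_def
proof (intro conjI ballI allI impI subset_refl)
  fix w v assume a: "w \<in> S" "(v, w) \<in> (E \<inter> S \<times> S)\<^sup>*"
  from a(2) show "v \<in> S"
  proof (cases rule: converse_rtranclE)
    case base then show ?thesis using a(1) by simp
  qed auto
qed

lemma lower_empty: "lower E S {}"
  unfolding lower_def by auto

lemma layering_chain:
  assumes "layering E S Ls" "k \<le> l" "l < length Ls"
  shows "Ls ! l \<subseteq> Ls ! k"
  using assms(2,3)
proof (induction l)
  case 0 then show ?case by simp
next
  case (Suc l)
  show ?case
  proof (cases "k = Suc l")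
    case False
    then have "Ls ! l \<subseteq> Ls ! k" using Suc by auto
    moreover have "Ls ! Suc l \<subseteq> Ls ! l" using assms(1) Suc.prems unfolding layering_def by blast
    ultimately show ?thesis by blast
  qed simp
qed

lemma layering_sub: "layering E S Ls \<Longrightarrow> k < length Ls \<Longrightarrow> Ls ! k \<subseteq> S"
  unfolding layering_def lower_def by blast

lemma layering_hd: "layering E S Ls \<Longrightarrow> Ls ! 0 = S"
  unfolding layering_def by (metis hd_conv_nth)

lemma layering_last: "layering E S Ls \<Longrightarrow> Ls ! (length Ls - 1) = {}"
  unfolding layering_def by (metis last_conv_nth)

lemma admissible_sub: "admissible V E A \<Longrightarrow> A \<subseteq> V"
proof -
  assume "admissible V E A"
  then obtain Ls i j where "layering E V Ls" "i \<le> j" "j < length Ls" "A = Ls ! i - Ls ! j"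
    unfolding admissible_def by blast
  then show ?thesis using layering_sub[of E V Ls i] by auto
qed

lemma XT_D: "Ls \<in> XT V E n \<Longrightarrow> length Ls = Suc n \<and> admissible V E (hd Ls) \<and> layering E (hd Ls) Ls"
  by (simp add: XT_def)

lemma XT_sub: "Ls \<in> XT V E n \<Longrightarrow> k \<le> n \<Longrightarrow> Ls ! k \<subseteq> V"
proof -
  assume a: "Ls \<in> XT V E n" "k \<le> n"
  from XT_D[OF a(1)] have "Ls ! k \<subseteq> hd Ls" using layering_sub a(2) by (metis le_imp_less_Suc)
  moreover have "hd Ls \<subseteq> V" using XT_D[OF a(1)] admissible_sub by blast
  ultimately show ?thesis by blast
qed

lemma XT_chain: "Ls \<in> XT V E n \<Longrightarrow> k \<le> l \<Longrightarrow> l \<le> n \<Longrightarrow> Ls ! l \<subseteq> Ls ! k"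
  using XT_D layering_chain by (metis le_imp_less_Suc)

lemma XT_last: "Ls \<in> XT V E n \<Longrightarrow> Ls ! n = {}"
  using XT_D layering_last by fastforce

lemma XT_hd: "Ls \<in> XT V E n \<Longrightarrow> Ls ! 0 = hd Ls"
  using XT_D layering_hd by fastforce

lemma XT_lower: "Ls \<in> XT V E n \<Longrightarrow> k \<le> n \<Longrightarrow> lower E (hd Ls) (Ls ! k)"
  using XT_D unfolding layering_def by (metis le_imp_less_Suc)

lemma XT_I:
  assumes "length Ls = Suc n" "admissible V E (Ls ! 0)"
    "\<And>k. k \<le> n \<Longrightarrow> lower E (Ls ! 0) (Ls ! k)"
    "\<And>k. k < n \<Longrightarrow> Ls ! Suc k \<subseteq> Ls ! k" "Ls ! n = {}"
  shows "Ls \<in> XT V E n"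
proof -
  have ne: "Ls \<noteq> []" using assms(1) by auto
  have "hd Ls = Ls ! 0" using ne by (simp add: hd_conv_nth)
  moreover have "last Ls = Ls ! n" using ne assms(1) by (simp add: last_conv_nth)
  ultimately show ?thesis using assms ne unfolding XT_def layering_def
    by (auto simp: less_Suc_eq_le)
qed




lemma T_face_nth: "Ls \<in> XT V E n \<Longrightarrow> i < n \<Longrightarrow> k < n \<Longrightarrow>
    T_face n i Ls ! k = Ls ! (if k < i then k else Suc k)"
  unfolding T_face_def using XT_D[of Ls V E n] by (subst nth_del) auto

lemma T_face_len: "Ls \<in> XT V E n \<Longrightarrow> i < n \<Longrightarrow> length (T_face n i Ls) = n"
  unfolding T_face_def using XT_D[of Ls V E n] by auto

lemma T_face_XT:
  assumes a: "Ls \<in> XT V E n" and i: "0 < i" "i < n"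
  shows "T_face n i Ls \<in> XT V E (n - 1)"
proof -
  let ?L = "T_face n i Ls"
  have nth: "\<And>k. k < n \<Longrightarrow> ?L ! k = Ls ! (if k < i then k else Suc k)"
    using T_face_nth[OF a i(2)] .
  have h0: "?L ! 0 = hd Ls" using nth[of 0] i XT_hd[OF a] by auto
  show ?thesis
  proof (rule XT_I)
    show "length ?L = Suc (n - 1)" using T_face_len[OF a i(2)] i by auto
    show "admissible V E (?L ! 0)" using h0 XT_D[OF a] by simp
    show "lower E (?L ! 0) (?L ! k)" if "k \<le> n - 1" for k
      using that nth[of k] i h0 XT_lower[OF a, of "if k < i then k else Suc k"] by auto
    show "?L ! Suc k \<subseteq> ?L ! k" if "k < n - 1" for k
      using that nth[of k] nth[of "Suc k"] XT_chain[OF a] by auto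
    show "?L ! (n - 1) = {}" using nth[of "n - 1"] i XT_last[OF a] by auto
  qed
qed

lemma T_degen_nth: "Ls \<in> XT V E n \<Longrightarrow> j \<le> n \<Longrightarrow> k \<le> Suc n \<Longrightarrow>
    T_degen n j Ls ! k = Ls ! (if k \<le> j then k else k - 1)"
  unfolding T_degen_def using XT_D[of Ls V E n] by (subst nth_dup) auto

lemma T_degen_len: "Ls \<in> XT V E n \<Longrightarrow> j \<le> n \<Longrightarrow> length (T_degen n j Ls) = Suc (Suc n)"
  unfolding T_degen_def using XT_D[of Ls V E n] by auto

lemma T_degen_XT:
  assumes a: "Ls \<in> XT V E n" and j: "j \<le> n"
  shows "T_degen n j Ls \<in> XT V E (Suc n)"
proof -
  let ?L = "T_degen n j Ls"
  have nth: "\<And>k. k \<le> Suc n \<Longrightarrow> ?L ! k = Ls ! (if k \<le> j then k else k - 1)"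
    using T_degen_nth[OF a j] .
  have h0: "?L ! 0 = hd Ls" using nth[of 0] XT_hd[OF a] by auto
  show ?thesis
  proof (rule XT_I)
    show "length ?L = Suc (Suc n)" using T_degen_len[OF a j] .
    show "admissible V E (?L ! 0)" using h0 XT_D[OF a] by simp
    show "lower E (?L ! 0) (?L ! k)" if "k \<le> Suc n" for k
      using that nth[of k] h0 XT_lower[OF a, of "if k \<le> j then k else k - 1"] j by auto
    show "?L ! Suc k \<subseteq> ?L ! k" if "k < Suc n" for k
      using that nth[of k] nth[of "Suc k"] XT_chain[OF a] j by auto
    show "?L ! Suc n = {}" using nth[of "Suc n"] j XT_last[OF a] by auto
  qed
qed

lemma diff_cover: "(\<forall>k < m. L (Suc k) \<subseteq> L k) \<Longrightarrow> v \<in> L 0 \<Longrightarrow> v \<notin> L m \<Longrightarrow> \<exists>k < m. v \<in> L k - L (Suc k)"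
proof (induction m)
  case 0 then show ?case by simp
next
  case (Suc m)
  then show ?case by (cases "v \<in> L m") (auto intro: less_SucI)
qed

lemma Umap_XG:
  assumes a: "Ls \<in> XT V E n"
  shows "Umap E n Ls \<in> XG V E n"
proof -
  let ?S = "map (\<lambda>k. Ls ! k - Ls ! Suc k) [0..<n]"
  have U: "\<Union> (set ?S) = hd Ls"
  proof
    show "\<Union> (set ?S) \<subseteq> hd Ls"
    proof
      fix v assume "v \<in> \<Union> (set ?S)"
      then obtain k where "k < n" "v \<in> Ls ! k" by auto
      then show "v \<in> hd Ls" using XT_chain[OF a, of 0 k] XT_hd[OF a] by auto
    qed
    show "hd Ls \<subseteq> \<Union> (set ?S)"
    proof
      fix v assume "v \<in> hd Ls"
      then have "v \<in> Ls ! 0" using XT_hd[OF a] by simp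
      moreover have "v \<notin> Ls ! n" using XT_last[OF a] by simp
      moreover have "\<forall>k < n. Ls ! Suc k \<subseteq> Ls ! k" using XT_chain[OF a] by auto
      ultimately obtain k where "k < n" "v \<in> Ls ! k - Ls ! Suc k"
        using diff_cover[of n "\<lambda>k. Ls ! k"] by blast
      then show "v \<in> \<Union> (set ?S)" by auto
    qed
  qed
  have disj: "\<forall>k < n. \<forall>l < n. k \<noteq> l \<longrightarrow> ?S ! k \<inter> ?S ! l = {}"
  proof (intro allI impI)
    fix k l assume kl: "k < n" "l < n" "k \<noteq> l"
    have "(Ls ! k - Ls ! Suc k) \<inter> (Ls ! l - Ls ! Suc l) = {}"
    proof (cases "k < l")
      case True
      then have "Ls ! l \<subseteq> Ls ! Suc k" using XT_chain[OF a, of "Suc k" l] kl by auto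
      then show ?thesis by blast
    next
      case False
      then have "Ls ! k \<subseteq> Ls ! Suc l" using XT_chain[OF a, of "Suc l" k] kl by auto
      then show ?thesis by blast
    qed
    then show "?S ! k \<inter> ?S ! l = {}" using kl by simp
  qed
  have "hd Ls \<subseteq> V" using XT_D[OF a] admissible_sub by blast
  then show ?thesis unfolding Umap_def XG_def using U disj by auto
qed

lemma G_face_XG:
  assumes a: "(F, Ss) \<in> XG V E n" and i: "0 < i" "i < n"
  shows "G_face n i (F, Ss) \<in> XG V E (n - 1)"
proof -
  have len: "length Ss = n" using a by (simp add: XG_def)
  let ?S = "take (i - 1) Ss @ [Ss ! (i - 1) \<union> Ss ! i] @ drop (Suc i) Ss"
  have eq: "Ss = take (i - 1) Ss @ Ss ! (i - 1) # Ss ! i # drop (Suc i) Ss"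
  proof -
    have "drop (i - 1) Ss = Ss ! (i - 1) # drop i Ss"
      using Cons_nth_drop_Suc[of "i - 1" Ss] i len by simp
    moreover have "drop i Ss = Ss ! i # drop (Suc i) Ss"
      using Cons_nth_drop_Suc[of i Ss] i len by simp
    ultimately show ?thesis by (metis append_take_drop_id)
  qed
  have U: "\<Union> (set ?S) = \<Union> (set Ss)"
  proof -
    have "\<Union> (set Ss) = \<Union> (set (take (i - 1) Ss @ Ss ! (i - 1) # Ss ! i # drop (Suc i) Ss))"
      using eq by simp
    then show ?thesis by auto
  qed
  have nth: "\<And>k. k < n - 1 \<Longrightarrow> ?S ! k = (if k < i - 1 then Ss ! k else if k = i - 1 then Ss ! (i - 1) \<union> Ss ! i else Ss ! Suc k)"
    using nth_merge[of i Ss] i len by auto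
  have dj: "\<forall>k < n. \<forall>l < n. k \<noteq> l \<longrightarrow> Ss ! k \<inter> Ss ! l = {}" using a by (simp add: XG_def)
  have disj: "\<forall>k < n - 1. \<forall>l < n - 1. k \<noteq> l \<longrightarrow> ?S ! k \<inter> ?S ! l = {}"
  proof (intro allI impI)
    fix k l assume kl: "k < n - 1" "l < n - 1" "k \<noteq> l"
    define grp where "grp = (\<lambda>k. if k < i - 1 then {k} else if k = i - 1 then {i - 1, i} else {Suc k})"
    have g: "\<And>k. k < n - 1 \<Longrightarrow> ?S ! k = (\<Union>m\<in>grp k. Ss ! m)"
      using nth unfolding grp_def by auto
    have gn: "grp k \<subseteq> {..<n}" "grp l \<subseteq> {..<n}" using kl i unfolding grp_def by auto
    have gd: "grp k \<inter> grp l = {}" using kl i unfolding grp_def by (auto split: if_splits)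
    show "?S ! k \<inter> ?S ! l = {}"
      unfolding g[OF kl(1)] g[OF kl(2)]
    proof (rule ccontr)
      assume "(\<Union>m\<in>grp k. Ss ! m) \<inter> (\<Union>m\<in>grp l. Ss ! m) \<noteq> {}"
      then obtain x m m' where "m \<in> grp k" "m' \<in> grp l" "x \<in> Ss ! m" "x \<in> Ss ! m'" by blast
      moreover then have "m \<noteq> m'" "m < n" "m' < n" using gd gn by auto
      ultimately show False using dj by blast
    qed
  qed
  have "length ?S = n - 1" using len i by auto
  then show ?thesis using a U disj unfolding XG_def G_face_def by auto
qed




lemma G_degen_XG:
  assumes a: "(F, Ss) \<in> XG V E n" and j: "j \<le> n"
  shows "G_degen n j (F, Ss) \<in> XG V E (Suc n)"
proof -
  have len: "length Ss = n" using a by (simp add: XG_def)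
  let ?S = "take j Ss @ [{}] @ drop j Ss"
  have U: "\<Union> (set ?S) = \<Union> (set Ss)"
  proof -
    have "set Ss = set (take j Ss) \<union> set (drop j Ss)" by (metis append_take_drop_id set_append)
    then show ?thesis by auto
  qed
  have nth: "\<And>k. k \<le> n \<Longrightarrow> ?S ! k = (if k < j then Ss ! k else if k = j then {} else Ss ! (k - 1))"
    using nth_ins[of j Ss] j len by auto
  have dj: "\<forall>k < n. \<forall>l < n. k \<noteq> l \<longrightarrow> Ss ! k \<inter> Ss ! l = {}" using a by (simp add: XG_def)
  have disj: "\<forall>k < Suc n. \<forall>l < Suc n. k \<noteq> l \<longrightarrow> ?S ! k \<inter> ?S ! l = {}"
  proof (intro allI impI)
    fix k l assume kl: "k < Suc n" "l < Suc n" "k \<noteq> l"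
    define idx where "idx = (\<lambda>k::nat. if k < j then k else k - 1)"
    have g: "\<And>k. k < Suc n \<Longrightarrow> ?S ! k \<subseteq> (if k = j then {} else Ss ! idx k)"
      using nth unfolding idx_def by auto
    show "?S ! k \<inter> ?S ! l = {}"
    proof (cases "k = j \<or> l = j")
      case True then show ?thesis using g[OF kl(1)] g[OF kl(2)] by auto
    next
      case False
      then have "idx k \<noteq> idx l" "idx k < n" "idx l < n" using kl j unfolding idx_def by auto
      then have "Ss ! idx k \<inter> Ss ! idx l = {}" using dj by blast
      then show ?thesis using g[OF kl(1)] g[OF kl(2)] False by auto
    qed
  qed
  have "length ?S = Suc n" using len j by auto
  then show ?thesis using a U disj unfolding XG_def G_degen_def by auto
qed

definition kT :: "'v set list \<Rightarrow> nat list" where "kT Ls = map card Ls"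
definition kG :: "'v set set \<times> 'v set list \<Rightarrow> bool \<times> nat list"
  where "kG x = (fst x \<noteq> {}, map card (snd x))"

lemma isoT_kT:
  assumes x: "x \<in> XT V E n" and iso: "isoT pl P E m x y"
  shows "kT x = kT y"
proof -
  from iso obtain \<phi> where len: "length x = length y" and b: "bij_betw \<phi> (hd x) (hd y)"
    and im: "\<forall>k < length x. \<phi> ` (x ! k) = y ! k"
    unfolding isoT_def by blast
  have "card (x ! k) = card (y ! k)" if "k < length x" for k
  proof -
    have "x ! k \<subseteq> hd x" using XT_chain[OF x, of 0 k] XT_hd[OF x] XT_D[OF x] that by auto
    then have "inj_on \<phi> (x ! k)" using b bij_betw_imp_inj_on inj_on_subset by blast
    then show ?thesis using im that card_image by metis
  qed
  then show ?thesis unfolding kT_def using len by (simp add: list_eq_iff_nth_eq)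
qed

lemma isoG_kG:
  assumes x: "x \<in> XG V E n" and iso: "isoG m x y"
  shows "kG x = kG y"
proof -
  obtain F Ss F' Ss' where xy: "x = (F, Ss)" "y = (F', Ss')" by fastforce
  from iso obtain \<phi> where len: "length Ss = length Ss'"
    and b: "bij_betw \<phi> (\<Union> (set Ss)) (\<Union> (set Ss'))"
    and f: "(\<lambda>e. \<phi> ` e) ` F = F'" and im: "\<forall>k < length Ss. \<phi> ` (Ss ! k) = Ss' ! k"
    unfolding isoG_def xy by auto
  have "card (Ss ! k) = card (Ss' ! k)" if "k < length Ss" for k
  proof -
    have "Ss ! k \<subseteq> \<Union> (set Ss)" using that nth_mem by blast
    then have "inj_on \<phi> (Ss ! k)" using b bij_betw_imp_inj_on inj_on_subset by blast
    then show ?thesis using im that card_image by metis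
  qed
  then show ?thesis unfolding kG_def xy using len f by (auto simp: list_eq_iff_nth_eq)
qed

section \<open>Abstract pullback lemmas\<close>

lemma qclass_eq: "\<forall>x\<in>A. \<forall>y\<in>A. R x y \<longleftrightarrow> \<kappa> x = \<kappa> y \<Longrightarrow> x \<in> A \<Longrightarrow>
   qclass A R x = {y \<in> A. \<kappa> y = \<kappa> x}"
  unfolding qclass_def by auto

lemma qrep_cl: assumes "\<forall>x\<in>A. \<forall>y\<in>A. R x y \<longleftrightarrow> \<kappa> x = \<kappa> y" "x \<in> A"
  shows "qrep (qclass A R x) \<in> A \<and> \<kappa> (qrep (qclass A R x)) = \<kappa> x"
proof -
  have "x \<in> qclass A R x" using qclass_eq[OF assms] assms(2) by simp
  then have "qrep (qclass A R x) \<in> qclass A R x" unfolding qrep_def by (rule someI)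
  then show ?thesis using qclass_eq[OF assms] by simp
qed

lemma cl_map:
  assumes eA: "\<forall>x\<in>A. \<forall>y\<in>A. RA x y \<longleftrightarrow> \<kappa>A x = \<kappa>A y"
    and eB: "\<forall>x\<in>B. \<forall>y\<in>B. RB x y \<longleftrightarrow> \<kappa>B x = \<kappa>B y"
    and x: "x \<in> A" and mg: "\<forall>a\<in>A. g a \<in> B"
    and rg: "\<forall>x\<in>A. \<forall>y\<in>A. \<kappa>A x = \<kappa>A y \<longrightarrow> \<kappa>B (g x) = \<kappa>B (g y)"
  shows "qclass B RB (g (qrep (qclass A RA x))) = qclass B RB (g x)"
proof -
  define y where "y = qrep (qclass A RA x)"
  have y: "y \<in> A" "\<kappa>A y = \<kappa>A x" using qrep_cl[OF eA x] unfolding y_def by auto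
  then have "\<kappa>B (g y) = \<kappa>B (g x)" using rg x by blast
  moreover have "g y \<in> B" "g x \<in> B" using mg x y by auto
  ultimately show ?thesis unfolding y_def[symmetric] using qclass_eq[OF eB] by simp
qed

lemma cl_eq_iff:
  assumes eB: "\<forall>x\<in>B. \<forall>y\<in>B. RB x y \<longleftrightarrow> \<kappa>B x = \<kappa>B y" and "u \<in> B" "v \<in> B"
  shows "qclass B RB u = qclass B RB v \<longleftrightarrow> \<kappa>B u = \<kappa>B v"
proof
  assume "qclass B RB u = qclass B RB v"
  moreover have "u \<in> qclass B RB u" using qclass_eq[OF eB assms(2)] assms(2) by simp
  ultimately have "u \<in> qclass B RB v" by simp
  then show "\<kappa>B u = \<kappa>B v" using qclass_eq[OF eB assms(3)] by simp
next
  assume "\<kappa>B u = \<kappa>B v"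
  then show "qclass B RB u = qclass B RB v" using qclass_eq[OF eB] assms(2,3) by simp
qed

lemma quot_pb:
  assumes eA: "\<forall>x\<in>A. \<forall>y\<in>A. RA x y \<longleftrightarrow> \<kappa>A x = \<kappa>A y"
    and eB: "\<forall>x\<in>B. \<forall>y\<in>B. RB x y \<longleftrightarrow> \<kappa>B x = \<kappa>B y"
    and eC: "\<forall>x\<in>C. \<forall>y\<in>C. RC x y \<longleftrightarrow> \<kappa>C x = \<kappa>C y"
    and eD: "\<forall>x\<in>D. \<forall>y\<in>D. RD x y \<longleftrightarrow> \<kappa>D x = \<kappa>D y"
    and mg: "\<forall>a\<in>A. g a \<in> B" and mh: "\<forall>a\<in>A. h a \<in> C"
    and mk: "\<forall>b\<in>B. k b \<in> D" and ml: "\<forall>c\<in>C. l c \<in> D"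
    and rg: "\<forall>x\<in>A. \<forall>y\<in>A. \<kappa>A x = \<kappa>A y \<longrightarrow> \<kappa>B (g x) = \<kappa>B (g y)"
    and rh: "\<forall>x\<in>A. \<forall>y\<in>A. \<kappa>A x = \<kappa>A y \<longrightarrow> \<kappa>C (h x) = \<kappa>C (h y)"
    and rk: "\<forall>x\<in>B. \<forall>y\<in>B. \<kappa>B x = \<kappa>B y \<longrightarrow> \<kappa>D (k x) = \<kappa>D (k y)"
    and rl: "\<forall>x\<in>C. \<forall>y\<in>C. \<kappa>C x = \<kappa>C y \<longrightarrow> \<kappa>D (l x) = \<kappa>D (l y)"
    and cm: "\<forall>a\<in>A. \<kappa>D (k (g a)) = \<kappa>D (l (h a))"
    and ex: "\<forall>b\<in>B. \<forall>c\<in>C. \<kappa>D (k b) = \<kappa>D (l c) \<longrightarrow> (\<exists>a\<in>A. \<kappa>B (g a) = \<kappa>B b \<and> \<kappa>C (h a) = \<kappa>C c)"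
    and un: "\<forall>a\<in>A. \<forall>a'\<in>A. \<kappa>B (g a) = \<kappa>B (g a') \<longrightarrow> \<kappa>C (h a) = \<kappa>C (h a') \<longrightarrow> \<kappa>A a = \<kappa>A a'"
  shows "pullback_sq (qclass A RA ` A) (qclass B RB ` B) (qclass C RC ` C)
     (\<lambda>X. qclass B RB (g (qrep X))) (\<lambda>X. qclass C RC (h (qrep X)))
     (\<lambda>X. qclass D RD (k (qrep X))) (\<lambda>X. qclass D RD (l (qrep X)))"
proof -
  note G = cl_map[OF eA eB _ mg rg] and H = cl_map[OF eA eC _ mh rh]
    and K = cl_map[OF eB eD _ mk rk] and L = cl_map[OF eC eD _ ml rl]
  show ?thesis unfolding pullback_sq_def
  proof (intro conjI ballI impI)
    show "(\<lambda>X. qclass B RB (g (qrep X))) ` qclass A RA ` A \<subseteq> qclass B RB ` B"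
    proof
      fix Y assume "Y \<in> (\<lambda>X. qclass B RB (g (qrep X))) ` qclass A RA ` A"
      then obtain a where "a \<in> A" "Y = qclass B RB (g (qrep (qclass A RA a)))" by blast
      then show "Y \<in> qclass B RB ` B" using G mg by auto
    qed
    show "(\<lambda>X. qclass C RC (h (qrep X))) ` qclass A RA ` A \<subseteq> qclass C RC ` C"
    proof
      fix Y assume "Y \<in> (\<lambda>X. qclass C RC (h (qrep X))) ` qclass A RA ` A"
      then obtain a where "a \<in> A" "Y = qclass C RC (h (qrep (qclass A RA a)))" by blast
      then show "Y \<in> qclass C RC ` C" using H mh by auto
    qed
  next
    fix X assume "X \<in> qclass A RA ` A"
    then obtain a where a: "a \<in> A" "X = qclass A RA a" by auto
    have ga: "g a \<in> B" "h a \<in> C" using a mg mh by auto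
    have "qclass D RD (k (g a)) = qclass D RD (l (h a))"
      using cl_eq_iff[OF eD, of "k (g a)" "l (h a)"] cm a ga mk ml by auto
    then show "qclass D RD (k (qrep (qclass B RB (g (qrep X))))) = qclass D RD (l (qrep (qclass C RC (h (qrep X)))))"
      using a G[OF a(1)] H[OF a(1)] K[OF ga(1)] L[OF ga(2)] by simp
  next
    fix Bc Cc assume "Bc \<in> qclass B RB ` B" "Cc \<in> qclass C RC ` C"
      and eq: "qclass D RD (k (qrep Bc)) = qclass D RD (l (qrep Cc))"
    then obtain b c where bc: "b \<in> B" "Bc = qclass B RB b" "c \<in> C" "Cc = qclass C RC c" by auto
    have "qclass D RD (k b) = qclass D RD (l c)" using eq K[OF bc(1)] L[OF bc(3)] bc by simp
    then have kl: "\<kappa>D (k b) = \<kappa>D (l c)" using cl_eq_iff[OF eD, of "k b" "l c"] mk ml bc by auto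
    from ex bc kl obtain a where a: "a \<in> A" "\<kappa>B (g a) = \<kappa>B b" "\<kappa>C (h a) = \<kappa>C c" by blast
    have ga: "g a \<in> B" "h a \<in> C" using a mg mh by auto
    show "\<exists>!X. X \<in> qclass A RA ` A \<and> qclass B RB (g (qrep X)) = Bc \<and> qclass C RC (h (qrep X)) = Cc"
    proof (rule ex1I[where a="qclass A RA a"])
      have "qclass B RB (g a) = qclass B RB b" using cl_eq_iff[OF eB ga(1) bc(1)] a by simp
      moreover have "qclass C RC (h a) = qclass C RC c" using cl_eq_iff[OF eC ga(2) bc(3)] a by simp
      ultimately show "qclass A RA a \<in> qclass A RA ` A \<and> qclass B RB (g (qrep (qclass A RA a))) = Bc \<and> qclass C RC (h (qrep (qclass A RA a))) = Cc"
        using a(1) G[OF a(1)] H[OF a(1)] bc by simp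
    next
      fix X assume X: "X \<in> qclass A RA ` A \<and> qclass B RB (g (qrep X)) = Bc \<and> qclass C RC (h (qrep X)) = Cc"
      then obtain a' where a': "a' \<in> A" "X = qclass A RA a'" by auto
      have ga': "g a' \<in> B" "h a' \<in> C" using a' mg mh by auto
      have "qclass B RB (g a') = qclass B RB b" using X a' G[OF a'(1)] bc by simp
      then have 1: "\<kappa>B (g a') = \<kappa>B (g a)" using cl_eq_iff[OF eB ga'(1) bc(1)] a by simp
      have "qclass C RC (h a') = qclass C RC c" using X a' H[OF a'(1)] bc by simp
      then have 2: "\<kappa>C (h a') = \<kappa>C (h a)" using cl_eq_iff[OF eC ga'(2) bc(3)] a by simp
      have "\<kappa>A a' = \<kappa>A a" using un a(1) a'(1) 1 2 by blast
      then show "X = qclass A RA a" using a'(2) cl_eq_iff[OF eA a'(1) a(1)] by simp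
    qed
  qed
qed

lemma direct_pb:
  assumes iA: "\<forall>x\<in>A. \<forall>y\<in>A. \<kappa>A x = \<kappa>A y \<longrightarrow> x = y"
    and iB: "\<forall>x\<in>B. \<forall>y\<in>B. \<kappa>B x = \<kappa>B y \<longrightarrow> x = y"
    and iC: "\<forall>x\<in>C. \<forall>y\<in>C. \<kappa>C x = \<kappa>C y \<longrightarrow> x = y"
    and iD: "\<forall>x\<in>D. \<forall>y\<in>D. \<kappa>D x = \<kappa>D y \<longrightarrow> x = y"
    and mg: "\<forall>a\<in>A. g a \<in> B" and mh: "\<forall>a\<in>A. h a \<in> C"
    and mk: "\<forall>b\<in>B. k b \<in> D" and ml: "\<forall>c\<in>C. l c \<in> D"
    and cm: "\<forall>a\<in>A. \<kappa>D (k (g a)) = \<kappa>D (l (h a))"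
    and ex: "\<forall>b\<in>B. \<forall>c\<in>C. \<kappa>D (k b) = \<kappa>D (l c) \<longrightarrow> (\<exists>a\<in>A. \<kappa>B (g a) = \<kappa>B b \<and> \<kappa>C (h a) = \<kappa>C c)"
    and un: "\<forall>a\<in>A. \<forall>a'\<in>A. \<kappa>B (g a) = \<kappa>B (g a') \<longrightarrow> \<kappa>C (h a) = \<kappa>C (h a') \<longrightarrow> \<kappa>A a = \<kappa>A a'"
  shows "pullback_sq A B C g h k l"
  unfolding pullback_sq_def
proof (intro conjI ballI impI)
  show "g ` A \<subseteq> B" "h ` A \<subseteq> C" using mg mh by auto
next
  fix a assume "a \<in> A" then show "k (g a) = l (h a)" using iD cm mg mh mk ml by metis
next
  fix b c assume bc: "b \<in> B" "c \<in> C" "k b = l c"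
  then obtain a where a: "a \<in> A" "\<kappa>B (g a) = \<kappa>B b" "\<kappa>C (h a) = \<kappa>C c" using ex by metis
  then have a2: "g a = b" "h a = c" using iB iC mg mh bc by blast+
  show "\<exists>!a. a \<in> A \<and> g a = b \<and> h a = c"
  proof (rule ex1I[where a=a])
    show "a \<in> A \<and> g a = b \<and> h a = c" using a a2 by simp
  next
    fix a' assume "a' \<in> A \<and> g a' = b \<and> h a' = c"
    then show "a' = a" using un iA a a2 by metis
  qed
qed




definition fT :: "nat \<Rightarrow> nat list \<Rightarrow> nat list" where "fT i ms = take i ms @ drop (Suc i) ms"
definition dT :: "nat \<Rightarrow> nat list \<Rightarrow> nat list" where "dT j ms = take (Suc j) ms @ drop j ms"
definition fG :: "nat \<Rightarrow> bool \<times> nat list \<Rightarrow> bool \<times> nat list"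
  where "fG i x = (fst x, take (i - 1) (snd x) @ [snd x ! (i - 1) + snd x ! i] @ drop (Suc i) (snd x))"
definition dG :: "nat \<Rightarrow> bool \<times> nat list \<Rightarrow> bool \<times> nat list"
  where "dG j x = (fst x, take j (snd x) @ [0] @ drop j (snd x))"
definition uM :: "nat \<Rightarrow> nat list \<Rightarrow> bool \<times> nat list"
  where "uM n ms = (ms ! 0 = 2, map (\<lambda>k. ms ! k - ms ! Suc k) [0..<n])"
definition KT :: "nat \<Rightarrow> nat \<Rightarrow> nat list \<Rightarrow> bool"
  where "KT c n ms \<longleftrightarrow> length ms = Suc n \<and> (\<forall>k < n. ms ! Suc k \<le> ms ! k) \<and> ms ! n = 0 \<and> ms ! 0 \<le> c"

lemma KT_mono: "KT c n ms \<Longrightarrow> k \<le> l \<Longrightarrow> l \<le> n \<Longrightarrow> ms ! l \<le> ms ! k"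
proof (induction l)
  case (Suc l) then show ?case
    by (cases "k = Suc l") (auto simp: KT_def intro: order_trans[of _ "ms ! l"])
qed simp

lemma fT_nth: "length ms = Suc n \<Longrightarrow> i < n \<Longrightarrow> k < n \<Longrightarrow> fT i ms ! k = ms ! (if k < i then k else Suc k)"
  unfolding fT_def by (subst nth_del) auto

lemma fT_nth': "length ms = Suc n \<Longrightarrow> i \<le> n \<Longrightarrow> k < n \<Longrightarrow> fT i ms ! k = ms ! (if k < i then k else Suc k)"
  unfolding fT_def by (subst nth_del) auto

lemma fT_len': "length ms = Suc n \<Longrightarrow> i \<le> n \<Longrightarrow> length (fT i ms) = n"
  unfolding fT_def by auto

lemma fT_len: "length ms = Suc n \<Longrightarrow> i < n \<Longrightarrow> length (fT i ms) = n"
  unfolding fT_def by auto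

lemma dT_nth: "length ms = Suc n \<Longrightarrow> j \<le> n \<Longrightarrow> k \<le> Suc n \<Longrightarrow> dT j ms ! k = ms ! (if k \<le> j then k else k - 1)"
  unfolding dT_def by (subst nth_dup) auto

lemma dT_len: "length ms = Suc n \<Longrightarrow> j \<le> n \<Longrightarrow> length (dT j ms) = Suc (Suc n)"
  unfolding dT_def by auto

lemma mnth: "k < m \<Longrightarrow> map f [0..<m] ! k = f k"
  by simp

lemma comm_face:
  assumes K: "KT c n ms" and i: "0 < i" "i < n"
  shows "uM (n - 1) (fT i ms) = fG i (uM n ms)"
proof -
  have len: "length ms = Suc n" using K by (simp add: KT_def)
  note f = fT_nth[OF len i(2)]
  define D where "D = map (\<lambda>k. ms ! k - ms ! Suc k) [0..<n]"
  have Dn: "\<And>m. m < n \<Longrightarrow> D ! m = ms ! m - ms ! Suc m" unfolding D_def by (rule mnth)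
  have lD: "length D = n" unfolding D_def by simp
  have m1: "ms ! Suc i \<le> ms ! i" "ms ! i \<le> ms ! (i - 1)" using KT_mono[OF K] i by auto
  have "map (\<lambda>k. fT i ms ! k - fT i ms ! Suc k) [0..<n - 1] = take (i - 1) D @ [D ! (i - 1) + D ! i] @ drop (Suc i) D"
  proof (rule nth_equalityI)
    show "length (map (\<lambda>k. fT i ms ! k - fT i ms ! Suc k) [0..<n - 1]) = length (take (i - 1) D @ [D ! (i - 1) + D ! i] @ drop (Suc i) D)"
      using i lD by auto
  next
    fix k assume "k < length (map (\<lambda>k. fT i ms ! k - fT i ms ! Suc k) [0..<n - 1])"
    then have k: "k < n - 1" by simp
    have r: "(take (i - 1) D @ [D ! (i - 1) + D ! i] @ drop (Suc i) D) ! k =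
      (if k < i - 1 then D ! k else if k = i - 1 then D ! (i - 1) + D ! i else D ! Suc k)"
      by (rule nth_merge) (use i k lD in auto)
    have l: "map (\<lambda>k. fT i ms ! k - fT i ms ! Suc k) [0..<n - 1] ! k = fT i ms ! k - fT i ms ! Suc k"
      by (rule mnth) (rule k)
    show "map (\<lambda>k. fT i ms ! k - fT i ms ! Suc k) [0..<n - 1] ! k = (take (i - 1) D @ [D ! (i - 1) + D ! i] @ drop (Suc i) D) ! k"
      unfolding r l
    proof -
      consider "k < i - 1" | "k = i - 1" | "i \<le> k" by linarith
      then show "fT i ms ! k - fT i ms ! Suc k = (if k < i - 1 then D ! k else if k = i - 1 then D ! (i - 1) + D ! i else D ! Suc k)"
      proof cases
        case 1 then show ?thesis using f[of k] f[of "Suc k"] Dn[of k] k i by auto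
      next
        case 2 then show ?thesis using f[of k] f[of "Suc k"] Dn[of "i - 1"] Dn[of i] k i m1 by auto
      next
        case 3 then show ?thesis using f[of k] f[of "Suc k"] Dn[of "Suc k"] k i by auto
      qed
    qed
  qed
  moreover have "fT i ms ! 0 = ms ! 0" using f[of 0] i by simp
  ultimately show ?thesis unfolding uM_def fG_def D_def by simp
qed

lemma comm_degen:
  assumes K: "KT c n ms" and j: "j \<le> n"
  shows "uM (Suc n) (dT j ms) = dG j (uM n ms)"
proof -
  have len: "length ms = Suc n" using K by (simp add: KT_def)
  note f = dT_nth[OF len j]
  define D where "D = map (\<lambda>k. ms ! k - ms ! Suc k) [0..<n]"
  have Dn: "\<And>m. m < n \<Longrightarrow> D ! m = ms ! m - ms ! Suc m" unfolding D_def by (rule mnth)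
  have lD: "length D = n" unfolding D_def by simp
  have "map (\<lambda>k. dT j ms ! k - dT j ms ! Suc k) [0..<Suc n] = take j D @ [0] @ drop j D"
  proof (rule nth_equalityI)
    show "length (map (\<lambda>k. dT j ms ! k - dT j ms ! Suc k) [0..<Suc n]) = length (take j D @ [0] @ drop j D)"
      using j lD by simp
  next
    fix k assume "k < length (map (\<lambda>k. dT j ms ! k - dT j ms ! Suc k) [0..<Suc n])"
    then have k: "k < Suc n" by simp
    have r: "(take j D @ [0] @ drop j D) ! k = (if k < j then D ! k else if k = j then 0 else D ! (k - 1))"
      by (rule nth_ins) (use j k lD in auto)
    have l: "map (\<lambda>k. dT j ms ! k - dT j ms ! Suc k) [0..<Suc n] ! k = dT j ms ! k - dT j ms ! Suc k"
      by (rule mnth) (rule k)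
    show "map (\<lambda>k. dT j ms ! k - dT j ms ! Suc k) [0..<Suc n] ! k = (take j D @ [0] @ drop j D) ! k"
      unfolding r l
    proof -
      consider "k < j" | "k = j" | "j < k" by linarith
      then show "dT j ms ! k - dT j ms ! Suc k = (if k < j then D ! k else if k = j then 0 else D ! (k - 1))"
      proof cases
        case 1 then show ?thesis using f[of k] f[of "Suc k"] Dn[of k] k j by auto
      next
        case 2 then show ?thesis using f[of k] f[of "Suc k"] k j by auto
      next
        case 3 then show ?thesis using f[of k] f[of "Suc k"] Dn[of "k - 1"] k j by auto
      qed
    qed
  qed
  moreover have "dT j ms ! 0 = ms ! 0" using f[of 0] by simp
  ultimately show ?thesis unfolding uM_def dG_def D_def by simp
qed

lemma ex_face:
  assumes K: "KT c (n - 1) bs" and lc: "length cs = n" and i: "0 < i" "i < n"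
    and h: "uM (n - 1) bs = fG i (bt, cs)"
  shows "\<exists>ms. KT c n ms \<and> fT i ms = bs \<and> uM n ms = (bt, cs)"
proof -
  obtain m where n: "n = Suc m" using i by (cases n) auto
  have lb: "length bs = n" using K n by (simp add: KT_def)
  have bt: "bt = (bs ! 0 = 2)" using h unfolding uM_def fG_def by simp
  have hl: "map (\<lambda>k. bs ! k - bs ! Suc k) [0..<n - 1] = take (i - 1) cs @ [cs ! (i - 1) + cs ! i] @ drop (Suc i) cs"
    using h unfolding uM_def fG_def by simp
  have H: "bs ! k - bs ! Suc k = (if k < i - 1 then cs ! k else if k = i - 1 then cs ! (i - 1) + cs ! i else cs ! Suc k)"
    if k: "k < n - 1" for k
  proof -
    have "bs ! k - bs ! Suc k = map (\<lambda>k. bs ! k - bs ! Suc k) [0..<n - 1] ! k" using mnth k by metis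
    also have "\<dots> = (take (i - 1) cs @ [cs ! (i - 1) + cs ! i] @ drop (Suc i) cs) ! k" using hl by simp
    also have "\<dots> = (if k < i - 1 then cs ! k else if k = i - 1 then cs ! (i - 1) + cs ! i else cs ! Suc k)"
      by (rule nth_merge) (use i k lc in auto)
    finally show ?thesis .
  qed
  have bm: "\<And>k l. k \<le> l \<Longrightarrow> l \<le> n - 1 \<Longrightarrow> bs ! l \<le> bs ! k" using KT_mono[OF K] by blast
  define ms where "ms = take i bs @ [bs ! i + cs ! i] @ drop i bs"
  have lm: "length ms = Suc n" unfolding ms_def using lb i by simp
  have mn: "ms ! k = (if k < i then bs ! k else if k = i then bs ! i + cs ! i else bs ! (k - 1))" if "k \<le> n" for k
    unfolding ms_def by (rule nth_ins) (use i that lb in auto)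
  have Hi: "bs ! (i - 1) = bs ! i + cs ! (i - 1) + cs ! i"
  proof -
    have "i - 1 < n - 1" using i n by simp
    from H[OF this] have "bs ! (i - 1) - bs ! Suc (i - 1) = cs ! (i - 1) + cs ! i" by simp
    moreover have "bs ! i \<le> bs ! (i - 1)" using bm[of "i - 1" i] i n by simp
    moreover have "Suc (i - 1) = i" using i by simp
    ultimately show ?thesis by simp
  qed
  have KT: "KT c n ms" unfolding KT_def
  proof (intro conjI allI impI)
    show "length ms = Suc n" by (rule lm)
    show "ms ! Suc k \<le> ms ! k" if "k < n" for k
    proof -
      consider "Suc k < i" | "Suc k = i" | "k = i" | "i < k" by linarith
      then show ?thesis
      proof cases
        case 1 then show ?thesis using mn[of k] mn[of "Suc k"] that bm[of k "Suc k"] n i by auto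
      next
        case 2 then show ?thesis using mn[of k] mn[of "Suc k"] that Hi by auto
      next
        case 3 then show ?thesis using mn[of k] mn[of "Suc k"] that by auto
      next
        case 4 then show ?thesis using mn[of k] mn[of "Suc k"] that bm[of "k - 1" k] n by auto
      qed
    qed
    show "ms ! n = 0" using mn[of n] i K n by (auto simp: KT_def)
    show "ms ! 0 \<le> c" using mn[of 0] i K by (auto simp: KT_def)
  qed
  have "fT i ms = bs"
  proof (rule nth_equalityI)
    show "length (fT i ms) = length bs" using fT_len[OF lm i(2)] lb by simp
    fix k assume "k < length (fT i ms)"
    then have k: "k < n" using fT_len[OF lm i(2)] by simp
    show "fT i ms ! k = bs ! k" using fT_nth[OF lm i(2) k] mn[of k] mn[of "Suc k"] k by auto
  qed
  moreover have "uM n ms = (bt, cs)"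
  proof -
    have "map (\<lambda>k. ms ! k - ms ! Suc k) [0..<n] = cs"
    proof (rule nth_equalityI)
      show "length (map (\<lambda>k. ms ! k - ms ! Suc k) [0..<n]) = length cs" using lc by simp
      fix k assume "k < length (map (\<lambda>k. ms ! k - ms ! Suc k) [0..<n])"
      then have k: "k < n" by simp
      have "map (\<lambda>k. ms ! k - ms ! Suc k) [0..<n] ! k = ms ! k - ms ! Suc k" by (rule mnth) (rule k)
      moreover have "ms ! k - ms ! Suc k = cs ! k"
      proof -
        consider "k < i - 1" | "k = i - 1" | "k = i" | "i < k" by linarith
        then show ?thesis
        proof cases
          case 1 then show ?thesis using mn[of k] mn[of "Suc k"] H[of k] k i by auto
        next
          case 2 then show ?thesis using mn[of k] mn[of "Suc k"] Hi k i by auto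
        next
          case 3 then show ?thesis using mn[of k] mn[of "Suc k"] k by auto
        next
          case 4 then show ?thesis using mn[of k] mn[of "Suc k"] H[of "k - 1"] k i by auto
        qed
      qed
      ultimately show "map (\<lambda>k. ms ! k - ms ! Suc k) [0..<n] ! k = cs ! k" by simp
    qed
    moreover have "ms ! 0 = bs ! 0" using mn[of 0] i by simp
    ultimately show ?thesis unfolding uM_def using bt by simp
  qed
  ultimately show ?thesis using KT by blast
qed

lemma un_face:
  assumes K: "KT c n ms" and K': "KT c n ms'" and i: "0 < i" "i < n"
    and f: "fT i ms = fT i ms'" and u: "uM n ms = uM n ms'"
  shows "ms = ms'"
proof (rule nth_equalityI)
  have lm: "length ms = Suc n" "length ms' = Suc n" using K K' by (auto simp: KT_def)
  then show "length ms = length ms'" by simp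
  fix k assume "k < length ms"
  then have k: "k \<le> n" using lm by simp
  have d: "ms ! i - ms ! Suc i = ms' ! i - ms' ! Suc i"
  proof -
    have "snd (uM n ms) = snd (uM n ms')" using u by simp
    then have L: "map (\<lambda>k. ms ! k - ms ! Suc k) [0..<n] = map (\<lambda>k. ms' ! k - ms' ! Suc k) [0..<n]"
      unfolding uM_def snd_conv .
    have "map (\<lambda>k. ms ! k - ms ! Suc k) [0..<n] ! i = map (\<lambda>k. ms' ! k - ms' ! Suc k) [0..<n] ! i"
      by (simp only: L)
    then show ?thesis using mnth[OF i(2)] by metis
  qed
  have s: "ms ! Suc i = ms' ! Suc i" using fT_nth[OF lm(1) i(2), of i] fT_nth[OF lm(2) i(2), of i] f i by simp
  have mo: "ms ! Suc i \<le> ms ! i" "ms' ! Suc i \<le> ms' ! i" using K K' i by (auto simp: KT_def)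
  show "ms ! k = ms' ! k"
  proof -
    consider "k < i" | "k = i" | "i < k" by linarith
    then show ?thesis
    proof cases
      case 1 then show ?thesis using fT_nth[OF lm(1) i(2), of k] fT_nth[OF lm(2) i(2), of k] f i by simp
    next
      case 2 then show ?thesis using d s mo by simp
    next
      case 3
      then have "k - 1 < n" "\<not> k - 1 < i" "Suc (k - 1) = k" using k by auto
      then show ?thesis using fT_nth[OF lm(1) i(2), of "k - 1"] fT_nth[OF lm(2) i(2), of "k - 1"] f by simp
    qed
  qed
qed

lemma ex_degen:
  assumes K: "KT c (Suc n) bs" and lc: "length cs = n" and j: "j \<le> n"
    and h: "uM (Suc n) bs = dG j (bt, cs)"
  shows "\<exists>ms. KT c n ms \<and> dT j ms = bs \<and> uM n ms = (bt, cs)"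
proof -
  have lb: "length bs = Suc (Suc n)" using K by (simp add: KT_def)
  have bt: "bt = (bs ! 0 = 2)" using h unfolding uM_def dG_def by simp
  have hl: "map (\<lambda>k. bs ! k - bs ! Suc k) [0..<Suc n] = take j cs @ [0] @ drop j cs"
    using h unfolding uM_def dG_def by simp
  have H: "bs ! k - bs ! Suc k = (if k < j then cs ! k else if k = j then 0 else cs ! (k - 1))"
    if k: "k < Suc n" for k
  proof -
    have "bs ! k - bs ! Suc k = map (\<lambda>k. bs ! k - bs ! Suc k) [0..<Suc n] ! k" using mnth k by metis
    also have "\<dots> = (take j cs @ [0] @ drop j cs) ! k" using hl by simp
    also have "\<dots> = (if k < j then cs ! k else if k = j then 0 else cs ! (k - 1))"
      by (rule nth_ins) (use j k lc in auto)
    finally show ?thesis .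
  qed
  have bm: "\<And>k l. k \<le> l \<Longrightarrow> l \<le> Suc n \<Longrightarrow> bs ! l \<le> bs ! k" using KT_mono[OF K] by blast
  have bj: "bs ! Suc j = bs ! j" using H[of j] bm[of j "Suc j"] j by auto
  define ms where "ms = fT (Suc j) bs"
  have lm: "length ms = Suc n" unfolding ms_def using fT_len'[OF lb, of "Suc j"] j by simp
  have mn: "ms ! k = bs ! (if k < Suc j then k else Suc k)" if "k < Suc n" for k
    unfolding ms_def using fT_nth'[OF lb _ that] j by simp
  have KT: "KT c n ms" unfolding KT_def
  proof (intro conjI allI impI)
    show "length ms = Suc n" by (rule lm)
    show "ms ! Suc k \<le> ms ! k" if "k < n" for k
      using mn[of k] mn[of "Suc k"] that bm[of k "Suc k"] bm[of "Suc k" "Suc (Suc k)"] bj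
      by (cases "Suc k < Suc j"; cases "k < Suc j") auto
    show "ms ! n = 0"
    proof (cases "n < Suc j")
      case True
      then have "j = n" using j by simp
      then show ?thesis using mn[of n] bj K by (auto simp: KT_def)
    next
      case False then show ?thesis using mn[of n] K by (auto simp: KT_def)
    qed
    show "ms ! 0 \<le> c" using mn[of 0] K by (auto simp: KT_def)
  qed
  have "dT j ms = bs"
  proof (rule nth_equalityI)
    show "length (dT j ms) = length bs" using dT_len[OF lm j] lb by simp
    fix k assume "k < length (dT j ms)"
    then have k: "k \<le> Suc n" using dT_len[OF lm j] by simp
    show "dT j ms ! k = bs ! k"
      using dT_nth[OF lm j k] mn[of k] mn[of "k - 1"] k bj j
      by (cases "k \<le> j"; cases "k = Suc j") auto
  qed
  moreover have "uM n ms = (bt, cs)"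
  proof -
    have "map (\<lambda>k. ms ! k - ms ! Suc k) [0..<n] = cs"
    proof (rule nth_equalityI)
      show "length (map (\<lambda>k. ms ! k - ms ! Suc k) [0..<n]) = length cs" using lc by simp
      fix k assume "k < length (map (\<lambda>k. ms ! k - ms ! Suc k) [0..<n])"
      then have k: "k < n" by simp
      have "map (\<lambda>k. ms ! k - ms ! Suc k) [0..<n] ! k = ms ! k - ms ! Suc k" by (rule mnth) (rule k)
      moreover have "ms ! k - ms ! Suc k = cs ! k"
      proof -
        consider "k < j" | "k = j" | "j < k" by linarith
        then show ?thesis
        proof cases
          case 1 then show ?thesis using mn[of k] mn[of "Suc k"] H[of k] k by auto
        next
          case 2 then show ?thesis using mn[of k] mn[of "Suc k"] H[of "Suc k"] bj k by auto
        next
          case 3 then show ?thesis using mn[of k] mn[of "Suc k"] H[of "Suc k"] k by auto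
        qed
      qed
      ultimately show "map (\<lambda>k. ms ! k - ms ! Suc k) [0..<n] ! k = cs ! k" by simp
    qed
    moreover have "ms ! 0 = bs ! 0" using mn[of 0] by simp
    ultimately show ?thesis unfolding uM_def using bt by simp
  qed
  ultimately show ?thesis using KT by blast
qed

lemma un_degen:
  assumes l: "length ms = Suc n" "length ms' = Suc n" and j: "j \<le> n" and d: "dT j ms = dT j ms'"
  shows "ms = ms'"
proof (rule nth_equalityI)
  show "length ms = length ms'" using l by simp
  fix k assume "k < length ms"
  then have k: "k \<le> n" using l by simp
  show "ms ! k = ms' ! k"
  proof (cases "k \<le> j")
    case True then show ?thesis using dT_nth[OF l(1) j, of k] dT_nth[OF l(2) j, of k] d k by simp
  next
    case False then show ?thesis using dT_nth[OF l(1) j, of "Suc k"] dT_nth[OF l(2) j, of "Suc k"] d k by simp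
  qed
qed




lemma kT_face: "kT (T_face n i Ls) = fT i (kT Ls)"
  by (simp add: kT_def T_face_def fT_def take_map drop_map)

lemma kT_degen: "kT (T_degen n j Ls) = dT j (kT Ls)"
  by (simp add: kT_def T_degen_def dT_def take_map drop_map)

lemma XG_fin: "(F, Ss) \<in> XG V E n \<Longrightarrow> finite V \<Longrightarrow> k < length Ss \<Longrightarrow> finite (Ss ! k)"
proof -
  assume a: "(F, Ss) \<in> XG V E n" "finite V" "k < length Ss"
  have "Ss ! k \<in> set Ss" using a(3) by (rule nth_mem)
  then have "Ss ! k \<subseteq> \<Union> (set Ss)" by (rule Union_upper)
  moreover have "\<Union> (set Ss) \<subseteq> V" using a(1) by (simp add: XG_def)
  ultimately have "Ss ! k \<subseteq> V" by (rule order_trans)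
  then show ?thesis using a(2) by (rule finite_subset)
qed

lemma kG_face:
  assumes a: "(F, Ss) \<in> XG V E n" and fin: "finite V" and i: "0 < i" "i < n"
  shows "kG (G_face n i (F, Ss)) = fG i (kG (F, Ss))"
proof -
  have len: "length Ss = n" using a by (simp add: XG_def)
  have dj: "\<forall>k < n. \<forall>l < n. k \<noteq> l \<longrightarrow> Ss ! k \<inter> Ss ! l = {}" using a by (simp add: XG_def)
  have "Ss ! (i - 1) \<inter> Ss ! i = {}" using dj[rule_format, of "i - 1" i] i by simp
  moreover have "finite (Ss ! (i - 1))" "finite (Ss ! i)" using XG_fin[OF a fin] i len by auto
  ultimately have "card (Ss ! (i - 1) \<union> Ss ! i) = card (Ss ! (i - 1)) + card (Ss ! i)"
    by (simp add: card_Un_disjoint)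
  then show ?thesis using i len by (simp add: kG_def fG_def G_face_def take_map drop_map)
qed

lemma kG_degen: "kG (G_degen n j x) = dG j (kG x)"
  by (cases x) (simp add: kG_def dG_def G_degen_def take_map drop_map)

lemma kT_KT:
  assumes a: "Ls \<in> XT V E n" and fin: "finite V"
  shows "KT (card V) n (kT Ls)"
proof -
  have len: "length Ls = Suc n" using XT_D[OF a] by simp
  have fk: "finite (Ls ! k)" if "k \<le> n" for k using XT_sub[OF a that] fin by (rule finite_subset)
  show ?thesis unfolding KT_def kT_def
  proof (intro conjI allI impI)
    show "length (map card Ls) = Suc n" using len by simp
    show "map card Ls ! Suc k \<le> map card Ls ! k" if "k < n" for k
      using that len XT_chain[OF a, of k "Suc k"] fk[of k] by (simp add: card_mono)
    show "map card Ls ! n = 0" using len XT_last[OF a] by simp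
    show "map card Ls ! 0 \<le> card V" using len XT_sub[OF a, of 0] fin by (simp add: card_mono)
  qed
qed

lemma kG_Umap_snd:
  assumes a: "Ls \<in> XT V E n" and fin: "finite V"
  shows "snd (kG (Umap E n Ls)) = snd (uM n (kT Ls))"
proof -
  have len: "length Ls = Suc n" using XT_D[OF a] by simp
  have "card (Ls ! k - Ls ! Suc k) = card (Ls ! k) - card (Ls ! Suc k)" if "k < n" for k
  proof -
    have "Ls ! Suc k \<subseteq> V" using XT_sub[OF a, of "Suc k"] that by simp
    then have "finite (Ls ! Suc k)" using fin by (rule finite_subset)
    then show ?thesis using XT_chain[OF a, of k "Suc k"] that by (simp add: card_Diff_subset)
  qed
  then show ?thesis using len by (simp add: kG_def Umap_def uM_def kT_def)
qed

section \<open>Small trees\<close>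

definition small :: "'v set \<Rightarrow> ('v \<times> 'v) set \<Rightarrow> 'v \<Rightarrow> 'v \<Rightarrow> bool"
  where "small V E r w \<longleftrightarrow> V = {r, w} \<and> E = (if r = w then {} else {(r, w)})"

definition sw :: "'v \<Rightarrow> 'v \<Rightarrow> 'v \<Rightarrow> 'v"
  where "sw r w v = (if v = r then w else if v = w then r else v)"

definition lay :: "'v \<Rightarrow> 'v \<Rightarrow> nat \<Rightarrow> 'v set"
  where "lay r w m = (if m = 0 then {} else if m = 1 then {r} else {r, w})"

lemma sub2: "A \<subseteq> {r, w} \<Longrightarrow> A = {} \<or> A = {r} \<or> A = {w} \<or> A = {r, w}"
  by (cases "r \<in> A"; cases "w \<in> A") auto

lemma small_path:
  assumes "R \<subseteq> {(r, w)}" "(v, u) \<in> R\<^sup>*"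
  shows "v = u \<or> (v = r \<and> u = w)"
  using assms(2)
proof (induction rule: rtrancl_induct)
  case (step y z)
  then show ?case using assms(1) by auto
qed simp

lemma small_E: "small V E r w \<Longrightarrow> E \<subseteq> {(r, w)}"
  unfolding small_def by auto

lemma small_lowerI:
  assumes s: "small V E r w" and "L \<subseteq> S" and "w \<in> L \<Longrightarrow> r \<in> L"
  shows "lower E S L"
  unfolding lower_def
proof (intro conjI ballI allI impI)
  show "L \<subseteq> S" by fact
  fix u v assume "u \<in> L" "(v, u) \<in> (E \<inter> S \<times> S)\<^sup>*"
  then show "v \<in> L" using small_path[of "E \<inter> S \<times> S" r w v u] small_E[OF s] assms(3) by auto
qed

lemma small_lowerD:
  assumes s: "small V E r w" and l: "lower E S L" and "w \<in> L" "r \<in> S" "r \<noteq> w"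
  shows "r \<in> L"
proof -
  have "(r, w) \<in> E" using s assms(5) unfolding small_def by simp
  moreover have "w \<in> S" using l assms(3) unfolding lower_def by auto
  ultimately have "(r, w) \<in> (E \<inter> S \<times> S)\<^sup>*" using assms(4) by auto
  then show ?thesis using l assms(3) unfolding lower_def by blast
qed

lemma small_adm:
  assumes s: "small V E r w" and A: "A = {} \<or> A = {r} \<or> A = {r, w}"
  shows "admissible V E A"
proof -
  have V: "V = {r, w}" using s by (simp add: small_def)
  have l1: "lower E V {r}" by (rule small_lowerI[OF s]) (auto simp: V)
  have L2: "layering E V [V, {}]" unfolding layering_def using lower_self lower_empty
    by (auto simp: less_Suc_eq)
  have L3: "layering E V [V, {r}, {}]" unfolding layering_def using lower_self lower_empty l1 V
    by (auto simp: less_Suc_eq nth_Cons split: nat.splits)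
  show ?thesis unfolding admissible_def
  proof -
    consider "A = {}" | "A = {r}" | "A = {r, w}" using A by blast
    then show "\<exists>Ls i j. 2 \<le> length Ls \<and> layering E V Ls \<and> i \<le> j \<and> j < length Ls \<and> A = Ls ! i - Ls ! j"
    proof cases
      case 1 then show ?thesis using L2 by (intro exI[of _ "[V, {}]"] exI[of _ 0]) auto
    next
      case 2 then show ?thesis using L3 by (intro exI[of _ "[V, {r}, {}]"] exI[of _ 1] exI[of _ 2]) auto
    next
      case 3 then show ?thesis using L2 V by (intro exI[of _ "[V, {}]"] exI[of _ 0] exI[of _ 1]) auto
    qed
  qed
qed

lemma card_lay: "m \<le> card {r, w} \<Longrightarrow> card (lay r w m) = m"
  unfolding lay_def by (cases "r = w") (auto simp: numeral_2_eq_2)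

lemma lay_mono: "m \<le> m' \<Longrightarrow> lay r w m \<subseteq> lay r w m'"
  unfolding lay_def by auto

lemma lay_real:
  assumes s: "small V E r w" and K: "KT (card V) n ms"
  shows "map (lay r w) ms \<in> XT V E n \<and> kT (map (lay r w) ms) = ms"
proof -
  have V: "V = {r, w}" using s by (simp add: small_def)
  have len: "length ms = Suc n" using K by (simp add: KT_def)
  have bd: "ms ! k \<le> card V" if "k \<le> n" for k using KT_mono[OF K, of 0 k] that K by (auto simp: KT_def)
  have "map (lay r w) ms \<in> XT V E n"
  proof (rule XT_I)
    show "length (map (lay r w) ms) = Suc n" using len by simp
    show "admissible V E (map (lay r w) ms ! 0)" using small_adm[OF s] len by (simp add: lay_def)
    show "lower E (map (lay r w) ms ! 0) (map (lay r w) ms ! k)" if "k \<le> n" for k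
    proof (rule small_lowerI[OF s])
      show "map (lay r w) ms ! k \<subseteq> map (lay r w) ms ! 0"
        using that len KT_mono[OF K, of 0 k] lay_mono[of "ms ! k" "ms ! 0" r w] by simp
      show "w \<in> map (lay r w) ms ! k \<Longrightarrow> r \<in> map (lay r w) ms ! k" using that len
        by (auto simp: lay_def split: if_splits)
    qed
    show "map (lay r w) ms ! Suc k \<subseteq> map (lay r w) ms ! k" if "k < n" for k
      using that len K lay_mono[of "ms ! Suc k" "ms ! k" r w] by (simp add: KT_def)
    show "map (lay r w) ms ! n = {}" using len K by (simp add: KT_def lay_def)
  qed
  moreover have "kT (map (lay r w) ms) = ms"
  proof -
    have "card (lay r w (ms ! i)) = ms ! i" if "i < Suc n" for i
      using bd[of i] that V card_lay[of "ms ! i" r w] by simp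
    then show ?thesis unfolding kT_def using len by (auto simp: list_eq_iff_nth_eq)
  qed
  ultimately show ?thesis by simp
qed




lemma Gedges_small: "small V E r w \<Longrightarrow> Gedges E = (if r = w then {} else {{r, w}})"
  unfolding small_def Gedges_def by auto

lemma card_rw: "r \<noteq> w \<Longrightarrow> card {r, w} = 2" by simp

lemma kG_Umap:
  assumes s: "small V E r w" and a: "Ls \<in> XT V E n"
  shows "kG (Umap E n Ls) = uM n (kT Ls)"
proof -
  have V: "V = {r, w}" using s by (simp add: small_def)
  have fin: "finite V" using V by simp
  have hsub: "hd Ls \<subseteq> {r, w}" using XT_sub[OF a, of 0] XT_hd[OF a] V by simp
  have len: "length Ls = Suc n" using XT_D[OF a] by simp
  have f: "({e \<in> Gedges E. e \<subseteq> hd Ls} \<noteq> {}) = (card (hd Ls) = 2)"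
  proof (cases "r = w")
    case True
    then have "card (hd Ls) \<le> 1" using hsub card_mono[of "{r}" "hd Ls"] by simp
    then show ?thesis using Gedges_small[OF s] True by simp
  next
    case False
    show ?thesis using sub2[OF hsub] Gedges_small[OF s] False by auto
  qed
  have "fst (kG (Umap E n Ls)) = fst (uM n (kT Ls))"
    using f len XT_hd[OF a] by (simp add: kG_def Umap_def uM_def kT_def)
  then show ?thesis using kG_Umap_snd[OF a fin] by (simp add: prod_eq_iff)
qed

lemma det:
  assumes s: "small V E r w" and H: "H \<subseteq> {r, w}" and A: "A \<subseteq> H" and B: "B \<subseteq> H"
    and lA: "lower E H A" and lB: "lower E H B" and c: "card A = card B"
  shows "A = B"
proof (cases "r = w")
  case True
  then have "A \<subseteq> {r}" "B \<subseteq> {r}" using A B H by auto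
  then show ?thesis using c by (cases "r \<in> A"; cases "r \<in> B") (auto simp: subset_singleton_iff)
next
  case False
  have a1: "w \<in> A \<Longrightarrow> r \<in> H \<Longrightarrow> r \<in> A" using small_lowerD[OF s lA _ _ False] by blast
  have b1: "w \<in> B \<Longrightarrow> r \<in> H \<Longrightarrow> r \<in> B" using small_lowerD[OF s lB _ _ False] by blast
  have "A \<subseteq> {r, w}" "B \<subseteq> {r, w}" using A B H by auto
  from sub2[OF this(1)] sub2[OF this(2)] show ?thesis
    using a1 b1 A B c False by (elim disjE) (auto simp: card_rw)
qed

lemma sw_single: "sw r w ` {r} = {w}" "sw r w ` {w} = {r}" "sw r w ` {r, w} = {r, w}"
  unfolding sw_def by auto

lemma sw_inv: "sw r w (sw r w v) = v"
  unfolding sw_def by auto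

lemma sw_inj: "inj_on (sw r w) A"
  by (metis inj_on_inverseI sw_inv)

lemma isoT_small:
  assumes s: "small V E r w" and x: "x \<in> XT V E n" and y: "y \<in> XT V E n'" and k: "kT x = kT y"
  shows "isoT pl P E m x y"
proof -
  have V: "V = {r, w}" using s by (simp add: small_def)
  have lx: "length x = Suc n" "length y = Suc n'" using XT_D[OF x] XT_D[OF y] by auto
  then have nn: "n' = n" using k by (metis kT_def length_map Suc_inject)
  have cd: "card (x ! j) = card (y ! j)" if "j \<le> n" for j
  proof -
    have "kT x ! j = kT y ! j" using k by simp
    then show ?thesis using that lx nn by (simp add: kT_def)
  qed
  have hx: "hd x \<subseteq> {r, w}" "hd y \<subseteq> {r, w}" using XT_sub[OF x, of 0] XT_hd[OF x] XT_sub[OF y, of 0] XT_hd[OF y] V by auto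
  have subx: "x ! j \<subseteq> hd x" if "j \<le> n" for j using XT_chain[OF x, of 0 j] XT_hd[OF x] that by simp
  have suby: "y ! j \<subseteq> hd y" if "j \<le> n" for j using XT_chain[OF y, of 0 j] XT_hd[OF y] that nn by simp
  have ch: "card (hd x) = card (hd y)" using cd[of 0] XT_hd[OF x] XT_hd[OF y] by simp
  have E: "E \<subseteq> {(r, w)}" by (rule small_E[OF s])
  show ?thesis
  proof (cases "hd x = hd y")
    case True
    have eq: "x ! j = y ! j" if "j \<le> n" for j
      using det[OF s hx(1) subx[OF that], of "y ! j"] suby[OF that] True XT_lower[OF x that]
        XT_lower[OF y, of j] that nn cd[OF that] by simp
    show ?thesis unfolding isoT_def
      by (rule conjI, use lx nn in simp, rule exI[of _ id]) (use True eq lx in \<open>auto simp: bij_betw_def\<close>)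
  next
    case False
    have rw: "r \<noteq> w" and hh: "(hd x = {r} \<and> hd y = {w}) \<or> (hd x = {w} \<and> hd y = {r})"
    proof -
      from sub2[OF hx(1)] sub2[OF hx(2)] ch False
      show "(hd x = {r} \<and> hd y = {w}) \<or> (hd x = {w} \<and> hd y = {r})"
        by (elim disjE) (auto simp: card_rw split: if_splits)
      then show "r \<noteq> w" using False by auto
    qed
    have noE: "\<And>a b. a \<in> hd x \<Longrightarrow> b \<in> hd x \<Longrightarrow> (a, b) \<notin> E" using hh E rw by auto
    have noE': "\<And>a b. a \<in> hd y \<Longrightarrow> b \<in> hd y \<Longrightarrow> (a, b) \<notin> E" using hh E rw by auto
    have img: "sw r w ` (x ! j) = y ! j" if "j \<le> n" for j
    proof -
      have "x ! j \<subseteq> hd x" "y ! j \<subseteq> hd y" using subx suby that by auto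
      then show ?thesis using hh cd[OF that] sw_single[of r w]
        by (auto simp: subset_singleton_iff)
    qed
    have bij: "bij_betw (sw r w) (hd x) (hd y)"
      using hh sw_single[of r w] sw_inj unfolding bij_betw_def by auto
    show ?thesis unfolding isoT_def
    proof (intro conjI exI[of _ "sw r w"])
      show "length x = length y" using lx nn by simp
      show "bij_betw (sw r w) (hd x) (hd y)" by (rule bij)
      show "\<forall>a\<in>hd x. \<forall>b\<in>hd x. ((a, b) \<in> E) = ((sw r w a, sw r w b) \<in> E)"
        using noE noE' bij bij_betwE by metis
      show "\<forall>k<length x. sw r w ` (x ! k) = y ! k" using img lx by auto
      show "pl \<longrightarrow> (\<forall>c\<in>hd x. \<forall>a\<in>hd x. \<forall>b\<in>hd x. (c, a) \<in> E \<and> (c, b) \<in> E \<longrightarrow> P a b = P (sw r w a) (sw r w b))"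
        using noE by blast
    qed
  qed
qed




lemma swap_parts:
  assumes rw: "r \<noteq> w"
    and sub: "\<forall>k<N. Ss ! k \<subseteq> {r, w} \<and> Ss' ! k \<subseteq> {r, w}"
    and dj: "\<forall>k<N. \<forall>l<N. k \<noteq> l \<longrightarrow> Ss ! k \<inter> Ss ! l = {}"
    and dj': "\<forall>k<N. \<forall>l<N. k \<noteq> l \<longrightarrow> Ss' ! k \<inter> Ss' ! l = {}"
    and cd: "\<forall>k<N. card (Ss ! k) = card (Ss' ! k)"
    and k0: "k0 < N" "Ss ! k0 \<noteq> Ss' ! k0"
  shows "\<forall>k<N. sw r w ` (Ss ! k) = Ss' ! k"
proof -
  have c: "(Ss ! k0 = {r} \<and> Ss' ! k0 = {w}) \<or> (Ss ! k0 = {w} \<and> Ss' ! k0 = {r})"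
  proof -
    have "Ss ! k0 \<subseteq> {r, w}" "Ss' ! k0 \<subseteq> {r, w}" "card (Ss ! k0) = card (Ss' ! k0)"
      using sub cd k0 by auto
    from sub2[OF this(1)] sub2[OF this(2)] this(3) show ?thesis
      using k0(2) rw by (elim disjE) (auto simp: card_rw)
  qed
  show ?thesis
  proof (intro allI impI)
    fix k assume k: "k < N"
    show "sw r w ` (Ss ! k) = Ss' ! k"
    proof (cases "k = k0")
      case True then show ?thesis using c sw_single[of r w] by auto
    next
      case False
      have d1: "Ss ! k \<inter> Ss ! k0 = {}" "Ss' ! k \<inter> Ss' ! k0 = {}" using dj dj' k k0 False by auto
      have s1: "Ss ! k \<subseteq> {r, w}" "Ss' ! k \<subseteq> {r, w}" "card (Ss ! k) = card (Ss' ! k)" using sub cd k by auto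
      from c show ?thesis
      proof (elim disjE conjE)
        assume a: "Ss ! k0 = {r}" "Ss' ! k0 = {w}"
        then have "Ss ! k \<subseteq> {w}" "Ss' ! k \<subseteq> {r}" using d1 s1 by auto
        then show ?thesis using s1(3) sw_single[of r w] by (auto simp: subset_singleton_iff)
      next
        assume a: "Ss ! k0 = {w}" "Ss' ! k0 = {r}"
        then have "Ss ! k \<subseteq> {r}" "Ss' ! k \<subseteq> {w}" using d1 s1 by auto
        then show ?thesis using s1(3) sw_single[of r w] by (auto simp: subset_singleton_iff)
      qed
    qed
  qed
qed

lemma Union_nth: "\<Union> (set xs) = (\<Union>k\<in>{..<length xs}. xs ! k)"
  by (auto simp: set_conv_nth)

lemma isoG_small:
  assumes s: "small V E r w" and x: "(F, Ss) \<in> XG V E n" and y: "(F', Ss') \<in> XG V E n'"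
    and k: "kG (F, Ss) = kG (F', Ss')"
  shows "isoG m (F, Ss) (F', Ss')"
proof -
  have V: "V = {r, w}" using s by (simp add: small_def)
  have kk: "(F \<noteq> {}) = (F' \<noteq> {})" "map card Ss = map card Ss'" using k by (auto simp: kG_def)
  have len: "length Ss = length Ss'" using kk(2) by (metis length_map)
  define N where "N = length Ss"
  have cd: "\<forall>j<N. card (Ss ! j) = card (Ss' ! j)" using kk(2) len unfolding N_def by (metis nth_map)
  have Fs: "F \<subseteq> Gedges E" "F' \<subseteq> Gedges E" using x y by (auto simp: XG_def)
  have FF: "F = F'"
  proof (cases "r = w")
    case True then show ?thesis using Fs Gedges_small[OF s] by auto
  next
    case False
    then have "F \<subseteq> {{r, w}}" "F' \<subseteq> {{r, w}}" using Fs Gedges_small[OF s] by auto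
    then show ?thesis using kk(1) by (auto simp: subset_singleton_iff)
  qed
  have UV: "\<Union> (set Ss) \<subseteq> {r, w}" "\<Union> (set Ss') \<subseteq> {r, w}" using x y V by (auto simp: XG_def)
  have sub: "\<forall>j<N. Ss ! j \<subseteq> {r, w} \<and> Ss' ! j \<subseteq> {r, w}"
    using UV len unfolding N_def by (metis Union_upper nth_mem order_trans)
  show ?thesis
  proof (cases "Ss = Ss'")
    case True
    then show ?thesis unfolding isoG_def using FF by (auto intro!: exI[of _ id] simp: bij_betw_def)
  next
    case False
    then obtain k0 where k0: "k0 < N" "Ss ! k0 \<noteq> Ss' ! k0" using len unfolding N_def
      by (meson nth_equalityI)
    have rw: "r \<noteq> w"
    proof
      assume rw: "r = w"
      have "Ss ! k0 \<subseteq> {r}" "Ss' ! k0 \<subseteq> {r}" using sub k0 rw by auto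
      then show False using k0 cd by (auto simp: subset_singleton_iff)
    qed
    have dj: "\<forall>k<N. \<forall>l<N. k \<noteq> l \<longrightarrow> Ss ! k \<inter> Ss ! l = {}" using x unfolding N_def XG_def by auto
    have dj': "\<forall>k<N. \<forall>l<N. k \<noteq> l \<longrightarrow> Ss' ! k \<inter> Ss' ! l = {}" using y len unfolding N_def XG_def by auto
    have im: "\<forall>k<N. sw r w ` (Ss ! k) = Ss' ! k" by (rule swap_parts[OF rw sub dj dj' cd k0])
    have U: "sw r w ` \<Union> (set Ss) = \<Union> (set Ss')"
      unfolding Union_nth image_UN using im len N_def by auto
    have Fi: "(\<lambda>e. sw r w ` e) ` F = F'"
    proof (cases "F = {}")
      case True then show ?thesis using FF by simp
    next
      case False
      then have "F = {{r, w}}" using Fs Gedges_small[OF s] rw by auto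
      then show ?thesis using FF sw_single[of r w] by simp
    qed
    have "bij_betw (sw r w) (\<Union> (set Ss)) (\<Union> (set Ss'))"
      using U sw_inj[of r w] by (simp add: bij_betw_def)
    then show ?thesis unfolding isoG_def prod.case
      using len Fi im unfolding N_def by (intro conjI exI[of _ "sw r w"]) auto
  qed
qed

lemma kT_inj_single:
  assumes s: "small V E r r" and x: "x \<in> XT V E n" and y: "y \<in> XT V E n" and k: "kT x = kT y"
  shows "x = y"
proof (rule nth_equalityI)
  have lx: "length x = Suc n" "length y = Suc n" using XT_D[OF x] XT_D[OF y] by auto
  then show "length x = length y" by simp
  fix j assume "j < length x"
  then have j: "j \<le> n" using lx by simp
  have V: "V = {r}" using s by (simp add: small_def)
  have "x ! j \<subseteq> {r}" "y ! j \<subseteq> {r}" using XT_sub[OF x j] XT_sub[OF y j] V by auto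
  moreover have "card (x ! j) = card (y ! j)" using k j lx by (metis kT_def nth_map le_imp_less_Suc)
  ultimately show "x ! j = y ! j" by (auto simp: subset_singleton_iff)
qed

lemma kG_inj_single:
  assumes s: "small V E r r" and x: "(F, Ss) \<in> XG V E n" and y: "(F', Ss') \<in> XG V E n" and k: "kG (F, Ss) = kG (F', Ss')"
  shows "(F, Ss) = (F', Ss')"
proof -
  have V: "V = {r}" using s by (simp add: small_def)
  have "F = {}" "F' = {}" using x y Gedges_small[OF s] by (auto simp: XG_def)
  moreover have "Ss = Ss'"
  proof (rule nth_equalityI)
    have kk: "map card Ss = map card Ss'" using k by (simp add: kG_def)
    then show len: "length Ss = length Ss'" by (metis length_map)
    fix j assume j: "j < length Ss"
    have UV: "\<Union> (set Ss) \<subseteq> {r}" "\<Union> (set Ss') \<subseteq> {r}" using x y V by (auto simp: XG_def)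
    have "Ss ! j \<subseteq> {r}" "Ss' ! j \<subseteq> {r}" using UV j len by (metis Union_upper nth_mem order_trans)+
    moreover have "card (Ss ! j) = card (Ss' ! j)" using kk j len by (metis nth_map)
    ultimately show "Ss ! j = Ss' ! j" by (auto simp: subset_singleton_iff)
  qed
  ultimately show ?thesis by simp
qed




lemma G_face_XG': "c \<in> XG V E n \<Longrightarrow> 0 < i \<Longrightarrow> i < n \<Longrightarrow> G_face n i c \<in> XG V E (n - 1)"
  by (metis G_face_XG prod.collapse)

lemma G_degen_XG': "c \<in> XG V E n \<Longrightarrow> j \<le> n \<Longrightarrow> G_degen n j c \<in> XG V E (Suc n)"
  by (metis G_degen_XG prod.collapse)

lemma kG_face': "c \<in> XG V E n \<Longrightarrow> finite V \<Longrightarrow> 0 < i \<Longrightarrow> i < n \<Longrightarrow> kG (G_face n i c) = fG i (kG c)"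
  by (metis kG_face prod.collapse)

lemma kG_len: "c \<in> XG V E n \<Longrightarrow> kG c = (fst (kG c), snd (kG c)) \<and> length (snd (kG c)) = n"
proof -
  assume c: "c \<in> XG V E n"
  obtain F Ss where cF: "c = (F, Ss)" by fastforce
  have "length Ss = n" using c unfolding cF by (simp add: XG_def)
  then show ?thesis unfolding cF by (simp add: kG_def)
qed

lemma small_fin: "small V E r w \<Longrightarrow> finite V"
  by (simp add: small_def)

lemma small_KT: "small V E r w \<Longrightarrow> a \<in> XT V E n \<Longrightarrow> KT (card V) n (kT a)"
  by (rule kT_KT) (simp_all add: small_fin)

lemma cm_face:
  assumes s: "small V E r w" and i: "0 < i" "i < n"
  shows "\<forall>a\<in>XT V E n. kG (Umap E (n - 1) (T_face n i a)) = kG (G_face n i (Umap E n a))"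
proof
  fix a assume a: "a \<in> XT V E n"
  have "kG (Umap E (n - 1) (T_face n i a)) = uM (n - 1) (fT i (kT a))"
    using kG_Umap[OF s T_face_XT[OF a i]] by (simp add: kT_face)
  also have "\<dots> = fG i (uM n (kT a))" by (rule comm_face[OF small_KT[OF s a] i])
  also have "\<dots> = kG (G_face n i (Umap E n a))"
    using kG_face'[OF Umap_XG[OF a] small_fin[OF s] i] kG_Umap[OF s a] by simp
  finally show "kG (Umap E (n - 1) (T_face n i a)) = kG (G_face n i (Umap E n a))" .
qed

lemma cm_degen:
  assumes s: "small V E r w" and j: "j \<le> n"
  shows "\<forall>a\<in>XT V E n. kG (Umap E (Suc n) (T_degen n j a)) = kG (G_degen n j (Umap E n a))"
proof
  fix a assume a: "a \<in> XT V E n"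
  have "kG (Umap E (Suc n) (T_degen n j a)) = uM (Suc n) (dT j (kT a))"
    using kG_Umap[OF s T_degen_XT[OF a j]] by (simp add: kT_degen)
  also have "\<dots> = dG j (uM n (kT a))" by (rule comm_degen[OF small_KT[OF s a] j])
  also have "\<dots> = kG (G_degen n j (Umap E n a))"
    using kG_Umap[OF s a] by (simp add: kG_degen)
  finally show "kG (Umap E (Suc n) (T_degen n j a)) = kG (G_degen n j (Umap E n a))" .
qed

lemma ex_face_sq:
  assumes s: "small V E r w" and i: "0 < i" "i < n"
  shows "\<forall>b\<in>XT V E (n - 1). \<forall>c\<in>XG V E n. kG (Umap E (n - 1) b) = kG (G_face n i c) \<longrightarrow>
     (\<exists>a\<in>XT V E n. kT (T_face n i a) = kT b \<and> kG (Umap E n a) = kG c)"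
proof (intro ballI impI)
  fix b c assume b: "b \<in> XT V E (n - 1)" and c: "c \<in> XG V E n"
    and h: "kG (Umap E (n - 1) b) = kG (G_face n i c)"
  obtain bt cs where bc: "kG c = (bt, cs)" "length cs = n" using kG_len[OF c] by (metis prod.collapse)
  have "uM (n - 1) (kT b) = fG i (bt, cs)"
    using h kG_Umap[OF s b] kG_face'[OF c small_fin[OF s] i] bc by simp
  then obtain ms where ms: "KT (card V) n ms" "fT i ms = kT b" "uM n ms = (bt, cs)"
    using ex_face[OF small_KT[OF s b] bc(2) i] by blast
  from lay_real[OF s ms(1)] have a: "map (lay r w) ms \<in> XT V E n" "kT (map (lay r w) ms) = ms" by auto
  show "\<exists>a\<in>XT V E n. kT (T_face n i a) = kT b \<and> kG (Umap E n a) = kG c"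
    using a ms kG_Umap[OF s a(1)] bc by (intro bexI[OF _ a(1)]) (simp add: kT_face)
qed

lemma ex_degen_sq:
  assumes s: "small V E r w" and j: "j \<le> n"
  shows "\<forall>b\<in>XT V E (Suc n). \<forall>c\<in>XG V E n. kG (Umap E (Suc n) b) = kG (G_degen n j c) \<longrightarrow>
     (\<exists>a\<in>XT V E n. kT (T_degen n j a) = kT b \<and> kG (Umap E n a) = kG c)"
proof (intro ballI impI)
  fix b c assume b: "b \<in> XT V E (Suc n)" and c: "c \<in> XG V E n"
    and h: "kG (Umap E (Suc n) b) = kG (G_degen n j c)"
  obtain bt cs where bc: "kG c = (bt, cs)" "length cs = n" using kG_len[OF c] by (metis prod.collapse)
  have "uM (Suc n) (kT b) = dG j (bt, cs)"
    using h kG_Umap[OF s b] bc by (simp add: kG_degen)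
  then obtain ms where ms: "KT (card V) n ms" "dT j ms = kT b" "uM n ms = (bt, cs)"
    using ex_degen[OF small_KT[OF s b] bc(2) j] by blast
  from lay_real[OF s ms(1)] have a: "map (lay r w) ms \<in> XT V E n" "kT (map (lay r w) ms) = ms" by auto
  show "\<exists>a\<in>XT V E n. kT (T_degen n j a) = kT b \<and> kG (Umap E n a) = kG c"
    using a ms kG_Umap[OF s a(1)] bc by (intro bexI[OF _ a(1)]) (simp add: kT_degen)
qed

lemma un_face_sq:
  assumes s: "small V E r w" and i: "0 < i" "i < n"
  shows "\<forall>a\<in>XT V E n. \<forall>a'\<in>XT V E n. kT (T_face n i a) = kT (T_face n i a') \<longrightarrow>
     kG (Umap E n a) = kG (Umap E n a') \<longrightarrow> kT a = kT a'"
proof (intro ballI impI)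
  fix a a' assume a: "a \<in> XT V E n" "a' \<in> XT V E n"
    and f: "kT (T_face n i a) = kT (T_face n i a')" and u: "kG (Umap E n a) = kG (Umap E n a')"
  have "fT i (kT a) = fT i (kT a')" using f by (simp add: kT_face)
  moreover have "uM n (kT a) = uM n (kT a')" using u kG_Umap[OF s a(1)] kG_Umap[OF s a(2)] by simp
  ultimately show "kT a = kT a'" by (rule un_face[OF small_KT[OF s a(1)] small_KT[OF s a(2)] i])
qed

lemma un_degen_sq:
  assumes j: "j \<le> n"
  shows "\<forall>a\<in>XT V E n. \<forall>a'\<in>XT V E n. kT (T_degen n j a) = kT (T_degen n j a') \<longrightarrow>
     kG (Umap E n a) = kG (Umap E n a') \<longrightarrow> kT a = kT a'"
proof (intro ballI impI)
  fix a a' assume a: "a \<in> XT V E n" "a' \<in> XT V E n" and d: "kT (T_degen n j a) = kT (T_degen n j a')"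
  have "length (kT a) = Suc n" "length (kT a') = Suc n" using XT_D[OF a(1)] XT_D[OF a(2)] by (auto simp: kT_def)
  moreover have "dT j (kT a) = dT j (kT a')" using d by (simp add: kT_degen)
  ultimately show "kT a = kT a'" by (rule un_degen[OF _ _ j])
qed

lemma culf_single:
  assumes s: "small V E r r"
  shows "culf (XT V E) T_face T_degen (XG V E) G_face G_degen (Umap E)"
proof -
  have iT: "\<forall>x\<in>XT V E m. \<forall>y\<in>XT V E m. kT x = kT y \<longrightarrow> x = y" for m
    using kT_inj_single[OF s] by blast
  have iG: "\<forall>x\<in>XG V E m. \<forall>y\<in>XG V E m. kG x = kG y \<longrightarrow> x = y" for m
  proof (intro ballI impI)
    fix x y assume "x \<in> XG V E m" "y \<in> XG V E m" "kG x = kG y"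
    then show "x = y" using kG_inj_single[OF s, of "fst x" "snd x" m "fst y" "snd y"] by simp
  qed
  show ?thesis unfolding culf_def
  proof (intro conjI allI impI)
    fix n j :: nat assume j: "j \<le> n"
    show "pullback_sq (XT V E n) (XT V E (Suc n)) (XG V E n) (T_degen n j) (Umap E n) (Umap E (Suc n)) (G_degen n j)"
      by (rule direct_pb[OF iT iT iG iG _ _ _ _ cm_degen[OF s j] ex_degen_sq[OF s j] un_degen_sq[OF j]])
        (use T_degen_XT Umap_XG G_degen_XG' j in auto)
  next
    fix n i :: nat assume i: "0 < i \<and> i < n"
    show "pullback_sq (XT V E n) (XT V E (n - 1)) (XG V E n) (T_face n i) (Umap E n) (Umap E (n - 1)) (G_face n i)"
      by (rule direct_pb[OF iT iT iG iG _ _ _ _ cm_face[OF s] ex_face_sq[OF s] un_face_sq[OF s]])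
        (use T_face_XT Umap_XG G_face_XG' i in auto)
  qed
qed

lemma qdegen_eta: "qdegen X R s n j = (\<lambda>C. qclass (X (Suc n)) (R (Suc n)) (s n j (qrep C)))"
  by (rule ext) (simp add: qdegen_def)
lemma qface_eta: "qface X R s n j = (\<lambda>C. qclass (X (n - 1)) (R (n - 1)) (s n j (qrep C)))"
  by (rule ext) (simp add: qface_def)
lemma qmap_eta: "qmap Y R f n = (\<lambda>C. qclass (Y n) (R n) (f n (qrep C)))"
  by (rule ext) (simp add: qmap_def)

lemma culf_unl_small:
  assumes s: "small V E r w"
  shows "U_culf_unlabelled pl P V E"
proof -
  have eT: "\<forall>x\<in>XT V E m. \<forall>y\<in>XT V E m. isoT pl P E m x y \<longleftrightarrow> kT x = kT y" for m
    using isoT_kT isoT_small[OF s] by blast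
  have eG: "\<forall>x\<in>XG V E m. \<forall>y\<in>XG V E m. isoG m x y \<longleftrightarrow> kG x = kG y" for m
  proof (intro ballI)
    fix x y assume x: "x \<in> XG V E m" and y: "y \<in> XG V E m"
    show "isoG m x y \<longleftrightarrow> kG x = kG y"
    proof
      assume "isoG m x y" then show "kG x = kG y" by (rule isoG_kG[OF x])
    next
      assume "kG x = kG y" then show "isoG m x y"
        using isoG_small[OF s, of "fst x" "snd x" m "fst y" "snd y" m] x y by simp
    qed
  qed
  have rU: "\<forall>x\<in>XT V E m. \<forall>y\<in>XT V E m. kT x = kT y \<longrightarrow> kG (Umap E m x) = kG (Umap E m y)" for m
    using kG_Umap[OF s] by metis
  show ?thesis unfolding U_culf_unlabelled_def culf_def qlevels_def qdegen_eta qface_eta qmap_eta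
  proof (intro conjI allI impI)
    fix n j :: nat assume j: "j \<le> n"
    have rg: "\<forall>x\<in>XT V E n. \<forall>y\<in>XT V E n. kT x = kT y \<longrightarrow> kT (T_degen n j x) = kT (T_degen n j y)"
      by (simp add: kT_degen)
    have rl: "\<forall>x\<in>XG V E n. \<forall>y\<in>XG V E n. kG x = kG y \<longrightarrow> kG (G_degen n j x) = kG (G_degen n j y)"
      by (simp add: kG_degen)
    show "pullback_sq (qclass (XT V E n) (isoT pl P E n) ` XT V E n)
          (qclass (XT V E (Suc n)) (isoT pl P E (Suc n)) ` XT V E (Suc n))
          (qclass (XG V E n) (isoG n) ` XG V E n)
          (\<lambda>C. qclass (XT V E (Suc n)) (isoT pl P E (Suc n)) (T_degen n j (qrep C)))
          (\<lambda>C. qclass (XG V E n) (isoG n) (Umap E n (qrep C)))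
          (\<lambda>C. qclass (XG V E (Suc n)) (isoG (Suc n)) (Umap E (Suc n) (qrep C)))
          (\<lambda>C. qclass (XG V E (Suc n)) (isoG (Suc n)) (G_degen n j (qrep C)))"
      by (rule quot_pb[OF eT eT eG eG _ _ _ _ rg rU rU rl cm_degen[OF s j] ex_degen_sq[OF s j] un_degen_sq[OF j]])
        (use T_degen_XT Umap_XG G_degen_XG' j in auto)
  next
    fix n i :: nat assume i: "0 < i \<and> i < n"
    have rg: "\<forall>x\<in>XT V E n. \<forall>y\<in>XT V E n. kT x = kT y \<longrightarrow> kT (T_face n i x) = kT (T_face n i y)"
      by (simp add: kT_face)
    have rl: "\<forall>x\<in>XG V E n. \<forall>y\<in>XG V E n. kG x = kG y \<longrightarrow> kG (G_face n i x) = kG (G_face n i y)"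
      using kG_face'[OF _ small_fin[OF s]] i by metis
    show "pullback_sq (qclass (XT V E n) (isoT pl P E n) ` XT V E n)
          (qclass (XT V E (n - 1)) (isoT pl P E (n - 1)) ` XT V E (n - 1))
          (qclass (XG V E n) (isoG n) ` XG V E n)
          (\<lambda>C. qclass (XT V E (n - 1)) (isoT pl P E (n - 1)) (T_face n i (qrep C)))
          (\<lambda>C. qclass (XG V E n) (isoG n) (Umap E n (qrep C)))
          (\<lambda>C. qclass (XG V E (n - 1)) (isoG (n - 1)) (Umap E (n - 1) (qrep C)))
          (\<lambda>C. qclass (XG V E (n - 1)) (isoG (n - 1)) (G_face n i (qrep C)))"
      by (rule quot_pb[OF eT eT eG eG _ _ _ _ rg rU rU rl cm_face[OF s] ex_face_sq[OF s] un_face_sq[OF s]])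
        (use T_face_XT Umap_XG G_face_XG' i in auto)
  qed
qed




lemma upt2: "[0..<2] = [0, 1]" by (simp add: numeral_2_eq_2)

lemma Umap2: "Umap E 2 [A0, A1, A2] = ({e \<in> Gedges E. e \<subseteq> A0}, [A0 - A1, A1 - A2])"
  by (simp add: Umap_def upt2)

lemma Umap1: "Umap E 1 [A0, A1] = ({e \<in> Gedges E. e \<subseteq> A0}, [A0 - A1])"
  by (simp add: Umap_def)

lemma Tface21: "T_face 2 1 [A0, A1, A2] = [A0, A2]"
  by (simp add: T_face_def)

lemma Gface21: "G_face 2 1 (F, [P1, P2]) = (F, [P1 \<union> P2])"
  by (simp add: G_face_def)

lemma len3: "length a = 3 \<Longrightarrow> \<exists>A0 A1 A2. a = [A0, A1, A2]"
  by (cases a; cases "tl a"; cases "tl (tl a)") (auto simp: numeral_3_eq_3)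

lemma len2: "length a = 2 \<Longrightarrow> \<exists>A0 A1. a = [A0, A1]"
  by (cases a; cases "tl a") (auto simp: numeral_2_eq_2)

lemma XT2: "a \<in> XT V E 2 \<Longrightarrow> \<exists>A0 A1 A2. a = [A0, A1, A2]"
proof -
  assume a: "a \<in> XT V E 2"
  have "length a = 3" using XT_D[OF a] by simp
  then show ?thesis by (rule len3)
qed

lemma XT1: "a \<in> XT V E 1 \<Longrightarrow> \<exists>A0. a = [A0, {}]"
proof -
  assume a: "a \<in> XT V E 1"
  have "length a = 2" using XT_D[OF a] by simp
  then obtain A0 A1 where "a = [A0, A1]" using len2 by blast
  moreover have "a ! 1 = {}" using XT_last[OF a] .
  ultimately show ?thesis by simp
qed

lemma XG2: "c \<in> XG V E 2 \<Longrightarrow> \<exists>F P1 P2. c = (F, [P1, P2])"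
proof -
  assume c: "c \<in> XG V E 2"
  obtain F Ss where "c = (F, Ss)" by fastforce
  moreover then have "length Ss = 2" using c by (simp add: XG_def)
  ultimately show ?thesis using len2 by blast
qed

lemma lower_tree_edge:
  assumes t: "rooted_tree V r E" and rc: "(r, c) \<in> E"
  shows "lower E V {r, c}"
  unfolding lower_def
proof (intro conjI ballI allI impI)
  show "{r, c} \<subseteq> V" using rt_sub[OF t rc] rt_reach by auto
  fix u v assume u: "u \<in> {r, c}" and p: "(v, u) \<in> (E \<inter> V \<times> V)\<^sup>*"
  have p': "(v, u) \<in> E\<^sup>*" using p rtrancl_mono[of "E \<inter> V \<times> V" E] by auto
  show "v \<in> {r, c}"
  proof (cases "u = r")
    case True then show ?thesis using rt_to_root[OF t] p' by auto
  next
    case False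
    then have "u = c" using u by simp
    then have "v = c \<or> (v, r) \<in> E\<^sup>*" using rt_parent_anc[OF t p'] rc by simp
    then show ?thesis using rt_to_root[OF t] by auto
  qed
qed

lemma layering3:
  assumes "lower E V L" "lower E V M" "M \<subseteq> L" "L \<subseteq> V"
  shows "layering E V [V, L, M, {}]"
  unfolding layering_def using assms lower_self[of E V] lower_empty[of E V]
  by (auto simp: nth_Cons less_Suc_eq numeral_2_eq_2 numeral_3_eq_3 split: nat.splits)

lemma adm_lower:
  assumes "lower E V L" "lower E V M" "M \<subseteq> L" "L \<subseteq> V"
  shows "admissible V E (L - M)"
  unfolding admissible_def
  by (rule exI[of _ "[V, L, M, {}]"], rule exI[of _ 1], rule exI[of _ 2]) (use layering3[OF assms] in simp)

lemma XT1_I: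
  assumes "admissible V E S"
  shows "[S, {}] \<in> XT V E 1"
  by (rule XT_I) (use assms lower_self lower_empty in \<open>auto simp: less_Suc_eq le_Suc_eq\<close>)

lemma lab_bad:
  assumes t: "rooted_tree V r E" and rc: "(r, c) \<in> E"
  shows "\<not> U_culf_labelled V E"
proof
  assume "U_culf_labelled V E"
  then have H: "\<forall>n i. 0 < i \<and> i < n \<longrightarrow> pullback_sq (XT V E n) (XT V E (n - 1)) (XG V E n) (T_face n i) (Umap E n) (Umap E (n - 1)) (G_face n i)"
    unfolding U_culf_labelled_def culf_def by blast
  have pb: "pullback_sq (XT V E 2) (XT V E 1) (XG V E 2) (T_face 2 1) (Umap E 2) (Umap E 1) (G_face 2 1)"
  proof -
    have "0 < (1::nat) \<and> (1::nat) < 2" by simp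
    with H have pb0: "pullback_sq (XT V E 2) (XT V E (2 - 1)) (XG V E 2) (T_face 2 1) (Umap E 2) (Umap E (2 - 1)) (G_face 2 1)"
      by blast
    have e: "(2::nat) - 1 = 1" by simp
    show ?thesis using pb0 unfolding e .
  qed
  have rnc: "r \<noteq> c" using rc rt_noin[OF t] by blast
  have cV: "c \<in> V" "r \<in> V" using rt_sub[OF t rc] by auto
  define F0 where "F0 = {e \<in> Gedges E. e \<subseteq> {r, c}}"
  have b: "[{r, c}, {}] \<in> XT V E 1"
  proof (rule XT1_I)
    have "admissible V E ({r, c} - {})"
      by (rule adm_lower[OF lower_tree_edge[OF t rc] lower_empty]) (use cV in auto)
    then show "admissible V E {r, c}" by simp
  qed
  have cc: "(F0, [{r}, {c}]) \<in> XG V E 2"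
    unfolding XG_def F0_def using cV rnc by (auto simp: less_Suc_eq numeral_2_eq_2)
  have eq: "Umap E 1 [{r, c}, {}] = G_face 2 1 (F0, [{r}, {c}])"
    unfolding Umap1 Gface21 F0_def by auto
  have PB: "\<forall>b\<in>XT V E 1. \<forall>c\<in>XG V E 2. Umap E 1 b = G_face 2 1 c \<longrightarrow> (\<exists>!a. a \<in> XT V E 2 \<and> T_face 2 1 a = b \<and> Umap E 2 a = c)"
    using pb unfolding pullback_sq_def by (elim conjE) assumption
  from PB[rule_format, OF b cc eq] obtain a where a: "a \<in> XT V E 2" "T_face 2 1 a = [{r, c}, {}]" "Umap E 2 a = (F0, [{r}, {c}])"
    by (elim ex1E) blast
  from XT2[OF a(1)] obtain A0 A1 A2 where aa: "a = [A0, A1, A2]" by blast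
  have A: "A0 = {r, c}" "A2 = {}" using a(2) unfolding aa Tface21 by auto
  have A1: "A1 = {c}" using a(3) unfolding aa Umap2 A by simp
  have "lower E (hd a) (a ! 1)" using XT_lower[OF a(1), of 1] by simp
  then have "lower E {r, c} {c}" unfolding aa A A1 by simp
  moreover have "(r, c) \<in> (E \<inter> {r, c} \<times> {r, c})\<^sup>*" using rc by auto
  ultimately have "r \<in> {c}" unfolding lower_def by (elim conjE) (drule bspec[of _ _ c], simp, blast)
  then show False using rnc by simp
qed




lemma isoT_refl: "isoT pl P E m x x"
  unfolding isoT_def by (intro conjI exI[of _ id]) auto

lemma isoG_refl: "isoG m x x"
  unfolding isoG_def by (cases x) (auto intro!: exI[of _ id])

lemma isoG_sym:
  assumes x: "(F, Ss) \<in> XG V E n" and iso: "isoG m (F, Ss) (F', Ss')"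
  shows "isoG m (F', Ss') (F, Ss)"
proof -
  from iso obtain \<phi> where len: "length Ss = length Ss'"
    and b: "bij_betw \<phi> (\<Union> (set Ss)) (\<Union> (set Ss'))"
    and f: "(\<lambda>e. \<phi> ` e) ` F = F'" and im: "\<forall>k < length Ss. \<phi> ` (Ss ! k) = Ss' ! k"
    unfolding isoG_def by auto
  define \<psi> where "\<psi> = inv_into (\<Union> (set Ss)) \<phi>"
  have inj: "inj_on \<phi> (\<Union> (set Ss))" using b bij_betw_imp_inj_on by blast
  have b': "bij_betw \<psi> (\<Union> (set Ss')) (\<Union> (set Ss))" unfolding \<psi>_def using b by (rule bij_betw_inv_into)
  have Fsub: "\<forall>e\<in>F. e \<subseteq> \<Union> (set Ss)" using x by (auto simp: XG_def)
  have canc: "\<psi> ` (\<phi> ` e) = e" if "e \<subseteq> \<Union> (set Ss)" for e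
    unfolding \<psi>_def using inv_into_image_cancel[OF inj that] .
  have f': "(\<lambda>e. \<psi> ` e) ` F' = F"
  proof -
    have "(\<lambda>e. \<psi> ` e) ` F' = (\<lambda>e. \<psi> ` (\<phi> ` e)) ` F" unfolding f[symmetric] by (simp add: image_image)
    also have "\<dots> = F" using canc Fsub by (simp cong: image_cong)
    finally show ?thesis .
  qed
  have im': "\<forall>k < length Ss'. \<psi> ` (Ss' ! k) = Ss ! k"
  proof (intro allI impI)
    fix k assume k: "k < length Ss'"
    have "Ss ! k \<in> set Ss" using k len by simp
    then have "Ss ! k \<subseteq> \<Union> (set Ss)" by (rule Union_upper)
    then show "\<psi> ` (Ss' ! k) = Ss ! k" using im k len canc by metis
  qed
  show ?thesis unfolding isoG_def prod.case using len b' f' im' by (intro conjI exI[of _ \<psi>]) auto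
qed

lemma isoG_trans:
  assumes "isoG m x y" "isoG m y z"
  shows "isoG m x z"
proof -
  obtain F Ss F' Ss' F'' Ss'' where xyz: "x = (F, Ss)" "y = (F', Ss')" "z = (F'', Ss'')" by (metis prod.collapse)
  from assms(1) obtain \<phi> where len: "length Ss = length Ss'"
    and b: "bij_betw \<phi> (\<Union> (set Ss)) (\<Union> (set Ss'))"
    and f: "(\<lambda>e. \<phi> ` e) ` F = F'" and im: "\<forall>k < length Ss. \<phi> ` (Ss ! k) = Ss' ! k"
    unfolding isoG_def xyz by auto
  from assms(2) obtain \<psi> where len': "length Ss' = length Ss''"
    and b': "bij_betw \<psi> (\<Union> (set Ss')) (\<Union> (set Ss''))"
    and f': "(\<lambda>e. \<psi> ` e) ` F' = F''" and im': "\<forall>k < length Ss'. \<psi> ` (Ss' ! k) = Ss'' ! k"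
    unfolding isoG_def xyz by auto
  have "bij_betw (\<psi> \<circ> \<phi>) (\<Union> (set Ss)) (\<Union> (set Ss''))" using b b' by (rule bij_betw_trans)
  moreover have "(\<lambda>e. (\<psi> \<circ> \<phi>) ` e) ` F = F''" unfolding f'[symmetric] f[symmetric]
    by (simp add: image_image image_comp)
  moreover have "\<forall>k < length Ss. (\<psi> \<circ> \<phi>) ` (Ss ! k) = Ss'' ! k"
  proof (intro allI impI)
    fix k assume k: "k < length Ss"
    have "(\<psi> \<circ> \<phi>) ` (Ss ! k) = \<psi> ` (\<phi> ` (Ss ! k))" by (simp add: image_comp)
    then show "(\<psi> \<circ> \<phi>) ` (Ss ! k) = Ss'' ! k" using im im' k len by simp
  qed
  ultimately show ?thesis unfolding isoG_def xyz prod.case using len len' by (intro conjI exI[of _ "\<psi> \<circ> \<phi>"]) auto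
qed

lemma isoG_sym': "x \<in> XG V E n \<Longrightarrow> isoG m x y \<Longrightarrow> isoG m y x"
  using isoG_sym[of "fst x" "snd x" V E n m "fst y" "snd y"] by simp

lemma cls_eq:
  assumes u: "u \<in> XG V E n" and v: "v \<in> XG V E n" and iso: "isoG n u v"
  shows "qclass (XG V E n) (isoG n) u = qclass (XG V E n) (isoG n) v"
  unfolding qclass_def using isoG_trans[OF isoG_sym'[OF u iso]] isoG_trans[OF iso] by auto

lemma qrep_mem: "x \<in> X \<Longrightarrow> qrep X \<in> X"
  unfolding qrep_def by (rule someI)

lemma edge_back:
  assumes inj: "inj_on \<phi> L0" and pq: "p \<in> L0" "q \<in> L0" "(p, q) \<in> E"
    and img: "\<phi> ` {p, q} = {\<phi> x, \<phi> y}" and x: "x \<in> L0" "x \<notin> L1" and y: "y \<in> L1" "L1 \<subseteq> L0"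
    and lo: "lower E L0 L1"
  shows "(y, x) \<in> E"
proof -
  have i2: "\<phi> ` {p, q} = \<phi> ` {x, y}" using img by simp
  have s2: "{p, q} \<subseteq> L0" "{x, y} \<subseteq> L0" using pq x y by auto
  have eq: "{p, q} = {x, y}" using inj_on_image_eq_iff[OF inj s2] i2 by simp
  have xy: "x \<noteq> y" using x y by auto
  show ?thesis
  proof (cases "p = x")
    case True
    then have "q = y" using eq xy by auto
    then have "(x, y) \<in> (E \<inter> L0 \<times> L0)\<^sup>*" using pq True by auto
    then have "x \<in> L1" using lo y unfolding lower_def by blast
    then show ?thesis using x by simp
  next
    case False
    then have "p = y" "q = x" using eq by auto
    then show ?thesis using pq by simp
  qed
qed

lemma no_lift:
  assumes t: "rooted_tree V r E" and a: "a \<in> XT V E 2"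
    and iso: "isoG m (Umap E 2 a) (F0, [{x0}, {y0, z0}])"
    and e1: "{x0, y0} \<in> F0" and e2: "{x0, z0} \<in> F0" and yz: "y0 \<noteq> z0"
  shows False
proof -
  from XT2[OF a] obtain L0 L1 L2 where aa: "a = [L0, L1, L2]" by blast
  have L2: "L2 = {}" using XT_last[OF a] aa by simp
  have L10: "L1 \<subseteq> L0" using XT_chain[OF a, of 0 1] aa by simp
  have lo: "lower E L0 L1" using XT_lower[OF a, of 1] aa by simp
  have U: "\<Union> (set [L0 - L1, L1 - L2]) = L0" using L2 L10 by auto
  from iso obtain \<phi> where b0: "bij_betw \<phi> (\<Union> (set [L0 - L1, L1 - L2])) (\<Union> (set [{x0}, {y0, z0}]))"
    and f: "(\<lambda>e. \<phi> ` e) ` {e \<in> Gedges E. e \<subseteq> L0} = F0"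
    and im0: "\<forall>k < length [L0 - L1, L1 - L2]. \<phi> ` ([L0 - L1, L1 - L2] ! k) = [{x0}, {y0, z0}] ! k"
    unfolding aa Umap2 isoG_def prod.case by blast
  have b: "bij_betw \<phi> L0 ({x0} \<union> {y0, z0})" using b0 unfolding U by simp
  have im: "\<phi> ` (L0 - L1) = {x0}" "\<phi> ` L1 = {y0, z0}" using im0[rule_format, of 0] im0[rule_format, of 1] L2 by auto
  have inj: "inj_on \<phi> L0" using b bij_betw_imp_inj_on by blast
  have "x0 \<in> \<phi> ` (L0 - L1)" using im(1) by simp
  then obtain x where x0: "x \<in> L0 - L1" "x0 = \<phi> x" by (rule imageE)
  then have x: "x \<in> L0" "x \<notin> L1" "\<phi> x = x0" by auto
  have "y0 \<in> \<phi> ` L1" using im(2) by simp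
  then obtain y where y0: "y \<in> L1" "y0 = \<phi> y" by (rule imageE)
  then have y: "y \<in> L1" "\<phi> y = y0" by auto
  have "z0 \<in> \<phi> ` L1" using im(2) by simp
  then obtain z where z0: "z \<in> L1" "z0 = \<phi> z" by (rule imageE)
  then have z: "z \<in> L1" "\<phi> z = z0" by auto
  have bk: "(u, x) \<in> E" if hu: "u \<in> L1" "{x0, \<phi> u} \<in> F0" for u
  proof -
    from hu(2) f obtain e where e: "e \<in> Gedges E" "e \<subseteq> L0" "\<phi> ` e = {x0, \<phi> u}" by blast
    then obtain p q where pq: "e = {p, q}" "(p, q) \<in> E" unfolding Gedges_def by blast
    show ?thesis
      by (rule edge_back[OF inj _ _ pq(2) _ x(1,2) hu(1) L10 lo]) (use e pq x hu in auto)
  qed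
  have "(y, x) \<in> E" using bk[OF y(1)] e1 y by simp
  moreover have "(z, x) \<in> E" using bk[OF z(1)] e2 z by simp
  ultimately have "y = z" using rt_uniq[OF t] by blast
  then show False using y z yz by simp
qed




lemma isoT_Umap1:
  assumes iso: "isoT pl P E m [S, {}] [S', {}]"
  shows "isoG k (Umap E 1 [S, {}]) (Umap E 1 [S', {}])"
proof -
  from iso obtain \<phi> where b: "bij_betw \<phi> S S'"
    and ed: "\<forall>a\<in>S. \<forall>b\<in>S. (a, b) \<in> E \<longleftrightarrow> (\<phi> a, \<phi> b) \<in> E"
    unfolding isoT_def by auto
  have img: "(\<lambda>e. \<phi> ` e) ` {e \<in> Gedges E. e \<subseteq> S} = {e \<in> Gedges E. e \<subseteq> S'}"
  proof
    show "(\<lambda>e. \<phi> ` e) ` {e \<in> Gedges E. e \<subseteq> S} \<subseteq> {e \<in> Gedges E. e \<subseteq> S'}"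
    proof
      fix e' assume "e' \<in> (\<lambda>e. \<phi> ` e) ` {e \<in> Gedges E. e \<subseteq> S}"
      then obtain e where e: "e \<in> Gedges E" "e \<subseteq> S" "e' = \<phi> ` e" by blast
      then obtain p q where pq: "e = {p, q}" "(p, q) \<in> E" unfolding Gedges_def by blast
      have "(\<phi> p, \<phi> q) \<in> E" using ed pq e by auto
      moreover have "\<phi> ` e \<subseteq> S'" using e b bij_betw_imp_surj_on by blast
      ultimately show "e' \<in> {e \<in> Gedges E. e \<subseteq> S'}" using e pq unfolding Gedges_def by auto
    qed
    show "{e \<in> Gedges E. e \<subseteq> S'} \<subseteq> (\<lambda>e. \<phi> ` e) ` {e \<in> Gedges E. e \<subseteq> S}"
    proof
      fix e' assume "e' \<in> {e \<in> Gedges E. e \<subseteq> S'}"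
      then obtain p' q' where pq: "e' = {p', q'}" "(p', q') \<in> E" "p' \<in> S'" "q' \<in> S'" unfolding Gedges_def by blast
      have sur: "\<phi> ` S = S'" using b by (simp add: bij_betw_def)
      obtain p where p: "p \<in> S" "p' = \<phi> p" using pq(3) sur by blast
      obtain q where q: "q \<in> S" "q' = \<phi> q" using pq(4) sur by blast
      have "(p, q) \<in> E" using ed p q pq(2) by auto
      then have "{p, q} \<in> {e \<in> Gedges E. e \<subseteq> S}" using p q unfolding Gedges_def by auto
      moreover have "e' = \<phi> ` {p, q}" using pq p q by simp
      ultimately show "e' \<in> (\<lambda>e. \<phi> ` e) ` {e \<in> Gedges E. e \<subseteq> S}" by blast
    qed
  qed
  have sur: "\<phi> ` S = S'" using b by (simp add: bij_betw_def)
  show ?thesis unfolding Umap1 isoG_def prod.case using b img sur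
    by (intro conjI exI[of _ \<phi>]) (auto simp: less_Suc_eq)
qed

lemma isoG_merge:
  assumes "isoG m (F, [A, B]) (F', [A', B'])"
  shows "isoG k (F, [A \<union> B]) (F', [A' \<union> B'])"
proof -
  from assms obtain \<phi> where b: "bij_betw \<phi> (A \<union> B) (A' \<union> B')" and f: "(\<lambda>e. \<phi> ` e) ` F = F'"
    and im: "\<phi> ` A = A'" "\<phi> ` B = B'"
    unfolding isoG_def prod.case by (auto simp: less_Suc_eq)
  show ?thesis unfolding isoG_def prod.case using b f im
    by (intro conjI exI[of _ \<phi>]) (auto simp: image_Un)
qed

lemma unl_bad:
  assumes t: "rooted_tree V r E" and adm: "admissible V E S" and S: "S = {x0, y0, z0}"
    and e1: "{x0, y0} \<in> Gedges E" and e2: "{x0, z0} \<in> Gedges E"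
    and d: "x0 \<noteq> y0" "x0 \<noteq> z0" "y0 \<noteq> z0"
  shows "\<not> U_culf_unlabelled pl P V E"
proof
  assume "U_culf_unlabelled pl P V E"
  then have H: "\<forall>n i. 0 < i \<and> i < n \<longrightarrow> pullback_sq
          (qclass (XT V E n) (isoT pl P E n) ` XT V E n)
          (qclass (XT V E (n - 1)) (isoT pl P E (n - 1)) ` XT V E (n - 1))
          (qclass (XG V E n) (isoG n) ` XG V E n)
          (\<lambda>C. qclass (XT V E (n - 1)) (isoT pl P E (n - 1)) (T_face n i (qrep C)))
          (\<lambda>C. qclass (XG V E n) (isoG n) (Umap E n (qrep C)))
          (\<lambda>C. qclass (XG V E (n - 1)) (isoG (n - 1)) (Umap E (n - 1) (qrep C)))
          (\<lambda>C. qclass (XG V E (n - 1)) (isoG (n - 1)) (G_face n i (qrep C)))"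
    unfolding U_culf_unlabelled_def culf_def qlevels_def qface_eta qmap_eta by blast
  have pb: "pullback_sq
          (qclass (XT V E 2) (isoT pl P E 2) ` XT V E 2)
          (qclass (XT V E 1) (isoT pl P E 1) ` XT V E 1)
          (qclass (XG V E 2) (isoG 2) ` XG V E 2)
          (\<lambda>C. qclass (XT V E 1) (isoT pl P E 1) (T_face 2 1 (qrep C)))
          (\<lambda>C. qclass (XG V E 2) (isoG 2) (Umap E 2 (qrep C)))
          (\<lambda>C. qclass (XG V E 1) (isoG 1) (Umap E 1 (qrep C)))
          (\<lambda>C. qclass (XG V E 1) (isoG 1) (G_face 2 1 (qrep C)))"
  proof -
    have "0 < (1::nat) \<and> (1::nat) < 2" by simp
    with H have pb0: "pullback_sq
          (qclass (XT V E 2) (isoT pl P E 2) ` XT V E 2)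
          (qclass (XT V E (2 - 1)) (isoT pl P E (2 - 1)) ` XT V E (2 - 1))
          (qclass (XG V E 2) (isoG 2) ` XG V E 2)
          (\<lambda>C. qclass (XT V E (2 - 1)) (isoT pl P E (2 - 1)) (T_face 2 1 (qrep C)))
          (\<lambda>C. qclass (XG V E 2) (isoG 2) (Umap E 2 (qrep C)))
          (\<lambda>C. qclass (XG V E (2 - 1)) (isoG (2 - 1)) (Umap E (2 - 1) (qrep C)))
          (\<lambda>C. qclass (XG V E (2 - 1)) (isoG (2 - 1)) (G_face 2 1 (qrep C)))"
      by blast
    have e: "(2::nat) - 1 = 1" by simp
    show ?thesis using pb0 unfolding e .
  qed
  define G0 where "G0 = {e \<in> Gedges E. e \<subseteq> S}"
  define b0 where "b0 = [S, {}]"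
  define c0 where "c0 = (G0, [{x0}, {y0, z0}])"
  have b0: "b0 \<in> XT V E 1" unfolding b0_def by (rule XT1_I[OF adm])
  have SV: "S \<subseteq> V" by (rule admissible_sub[OF adm])
  have c0: "c0 \<in> XG V E 2" unfolding c0_def XG_def G0_def using SV S d
    by (auto simp: less_Suc_eq numeral_2_eq_2)
  define Bc where "Bc = qclass (XT V E 1) (isoT pl P E 1) b0"
  define Cc where "Cc = qclass (XG V E 2) (isoG 2) c0"
  have Bc: "Bc \<in> qclass (XT V E 1) (isoT pl P E 1) ` XT V E 1" unfolding Bc_def using b0 by blast
  have Cc: "Cc \<in> qclass (XG V E 2) (isoG 2) ` XG V E 2" unfolding Cc_def using c0 by blast
  have b0B: "b0 \<in> Bc" unfolding Bc_def qclass_def using b0 isoT_refl by blast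
  have c0C: "c0 \<in> Cc" unfolding Cc_def qclass_def using c0 isoG_refl by blast
  define b' where "b' = qrep Bc"
  define c' where "c' = qrep Cc"
  have b': "b' \<in> XT V E 1" "isoT pl P E 1 b0 b'"
    using qrep_mem[OF b0B] unfolding b'_def Bc_def qclass_def by auto
  have c': "c' \<in> XG V E 2" "isoG 2 c0 c'"
    using qrep_mem[OF c0C] unfolding c'_def Cc_def qclass_def by auto
  obtain S' where S': "b' = [S', {}]" using XT1[OF b'(1)] by blast
  obtain F' P1 P2 where cc': "c' = (F', [P1, P2])" using XG2[OF c'(1)] by blast
  have u: "Umap E 1 b' \<in> XG V E 1" by (rule Umap_XG[OF b'(1)])
  have v: "G_face 2 1 c' \<in> XG V E 1" using G_face_XG'[OF c'(1), of 1] by simp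
  have u0: "Umap E 1 b0 \<in> XG V E 1" by (rule Umap_XG[OF b0])
  have i1: "isoG 1 (Umap E 1 b0) (Umap E 1 b')" using isoT_Umap1 b'(2) S' unfolding b0_def by blast
  have i2: "Umap E 1 b0 = (G0, [S])" unfolding b0_def Umap1 G0_def by simp
  have i3: "isoG 1 (G0, [S]) (G_face 2 1 c')"
  proof -
    have "isoG 1 (G0, [{x0} \<union> {y0, z0}]) (F', [P1 \<union> P2])"
      using isoG_merge c'(2) unfolding c0_def cc' by blast
    moreover have "{x0} \<union> {y0, z0} = S" using S by auto
    ultimately show ?thesis unfolding cc' Gface21 by simp
  qed
  have "isoG 1 (Umap E 1 b') (G_face 2 1 c')"
    using isoG_trans[OF isoG_sym'[OF u0 i1]] i2 i3 by simp
  then have eq: "qclass (XG V E 1) (isoG 1) (Umap E 1 (qrep Bc)) = qclass (XG V E 1) (isoG 1) (G_face 2 1 (qrep Cc))"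
    using cls_eq[OF u v] unfolding b'_def c'_def by simp
  have PB: "\<forall>Bc\<in>qclass (XT V E 1) (isoT pl P E 1) ` XT V E 1. \<forall>Cc\<in>qclass (XG V E 2) (isoG 2) ` XG V E 2.
     qclass (XG V E 1) (isoG 1) (Umap E 1 (qrep Bc)) = qclass (XG V E 1) (isoG 1) (G_face 2 1 (qrep Cc)) \<longrightarrow>
     (\<exists>!X. X \<in> qclass (XT V E 2) (isoT pl P E 2) ` XT V E 2 \<and>
        qclass (XT V E 1) (isoT pl P E 1) (T_face 2 1 (qrep X)) = Bc \<and>
        qclass (XG V E 2) (isoG 2) (Umap E 2 (qrep X)) = Cc)"
    using pb unfolding pullback_sq_def by (elim conjE) assumption
  from PB[rule_format, OF Bc Cc eq] obtain X where X: "X \<in> qclass (XT V E 2) (isoT pl P E 2) ` XT V E 2"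
    "qclass (XG V E 2) (isoG 2) (Umap E 2 (qrep X)) = Cc"
    by (elim ex1E) blast
  then obtain a where a: "a \<in> XT V E 2" "X = qclass (XT V E 2) (isoT pl P E 2) a" by blast
  have aX: "a \<in> X" unfolding a(2) qclass_def using a(1) isoT_refl by blast
  have a': "qrep X \<in> XT V E 2" using qrep_mem[OF aX] unfolding a(2) qclass_def by auto
  have "c0 \<in> qclass (XG V E 2) (isoG 2) (Umap E 2 (qrep X))" using X(2) c0C by simp
  then have iso: "isoG 2 (Umap E 2 (qrep X)) (G0, [{x0}, {y0, z0}])" unfolding qclass_def c0_def by simp
  have g1: "{x0, y0} \<in> G0" "{x0, z0} \<in> G0" unfolding G0_def using e1 e2 S by auto
  show False by (rule no_lift[OF t a' iso g1 d(3)])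
qed




lemma anc_sub: "rooted_tree V r E \<Longrightarrow> g \<in> V \<Longrightarrow> {v. (v, g) \<in> E\<^sup>*} \<subseteq> V"
proof
  fix v assume t: "rooted_tree V r E" and g: "g \<in> V" and "v \<in> {v. (v, g) \<in> E\<^sup>*}"
  then have "(v, g) \<in> E\<^sup>*" by simp
  then show "v \<in> V"
  proof (cases rule: converse_rtranclE)
    case base then show ?thesis using g by simp
  next
    case (step y) then show ?thesis using rt_sub[OF t] by blast
  qed
qed

lemma adm3:
  assumes t: "rooted_tree V r E" and gp: "(g, p) \<in> E" and qc: "(q, c) \<in> E" and q: "q = g \<or> q = p"
  shows "admissible V E {g, p, c}"
proof -
  define A where "A = {v. (v, g) \<in> E\<^sup>*}"
  define L where "L = A \<union> {p, c}"
  define M where "M = A - {g}"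
  have EV: "E \<inter> V \<times> V = E" using rt_EV[OF t] by blast
  have gV: "g \<in> V" "p \<in> V" "c \<in> V" using rt_sub[OF t gp] rt_sub[OF t qc] by auto
  have AV: "A \<subseteq> V" unfolding A_def using anc_sub[OF t gV(1)] .
  have gc: "(g, c) \<in> E\<^sup>+"
  proof (cases "q = g")
    case True then show ?thesis using qc by auto
  next
    case False then have "q = p" using q by simp
    then show ?thesis using gp qc by (meson trancl.simps r_into_trancl)
  qed
  have pA: "p \<notin> A"
  proof
    assume "p \<in> A"
    then have "(p, g) \<in> E\<^sup>*" unfolding A_def by simp
    then have "(g, g) \<in> E\<^sup>+" using gp by (meson rtrancl_into_trancl2)
    then show False using rt_acyc'[OF t] by blast
  qed
  have cA: "c \<notin> A"
  proof
    assume "c \<in> A"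
    then have "(c, g) \<in> E\<^sup>*" unfolding A_def by simp
    then have "(g, g) \<in> E\<^sup>+" using trancl_rtrancl_trancl[OF gc] by simp
    then show False using rt_acyc'[OF t] by blast
  qed
  have gA: "g \<in> A" unfolding A_def by simp
  have lL: "lower E V L" unfolding lower_def EV
  proof (intro conjI ballI allI impI)
    show "L \<subseteq> V" unfolding L_def using AV gV by auto
    fix u v assume u: "u \<in> L" and vu: "(v, u) \<in> E\<^sup>*"
    show "v \<in> L"
    proof (cases "u \<in> A")
      case True then show ?thesis using vu unfolding L_def A_def by (auto intro: rtrancl_trans)
    next
      case False
      then have "u = p \<or> u = c" using u unfolding L_def by auto
      then show ?thesis
      proof
        assume "u = p"
        then have "v = p \<or> (v, g) \<in> E\<^sup>*" using rt_parent_anc[OF t vu] gp by simp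
        then show ?thesis unfolding L_def A_def by auto
      next
        assume "u = c"
        then have vq: "v = c \<or> (v, q) \<in> E\<^sup>*" using rt_parent_anc[OF t vu] qc by simp
        show ?thesis
        proof (cases "v = c")
          case True then show ?thesis unfolding L_def by simp
        next
          case False
          then have "(v, q) \<in> E\<^sup>*" using vq by simp
          then have "(v, g) \<in> E\<^sup>* \<or> v = p" using q rt_parent_anc[OF t _ gp] by auto
          then show ?thesis unfolding L_def A_def by auto
        qed
      qed
    qed
  qed
  have lM: "lower E V M" unfolding lower_def EV
  proof (intro conjI ballI allI impI)
    show "M \<subseteq> V" unfolding M_def using AV by auto
    fix u v assume u: "u \<in> M" and vu: "(v, u) \<in> E\<^sup>*"
    have ug: "(u, g) \<in> E\<^sup>*" "u \<noteq> g" using u unfolding M_def A_def by auto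
    have vg: "(v, g) \<in> E\<^sup>*" using vu ug(1) by (rule rtrancl_trans)
    have "v \<noteq> g"
    proof
      assume "v = g"
      then have "u = g" using rt_antisym[OF t ug(1)] vu by simp
      then show False using ug(2) by simp
    qed
    then show "v \<in> M" unfolding M_def A_def using vg by simp
  qed
  have "L - M = {g, p, c}" unfolding L_def M_def using pA cA gA by auto
  moreover have "admissible V E (L - M)" by (rule adm_lower[OF lL lM]) (use AV gV in \<open>auto simp: L_def M_def\<close>)
  ultimately show ?thesis by simp
qed

lemma Gedge_in: "(p, q) \<in> E \<Longrightarrow> {p, q} \<in> Gedges E"
  unfolding Gedges_def by blast

lemma config:
  assumes t: "rooted_tree V r E" and e: "e1 \<in> E" "e2 \<in> E" "e1 \<noteq> e2"
  shows "\<exists>S x0 y0 z0. admissible V E S \<and> S = {x0, y0, z0} \<and> {x0, y0} \<in> Gedges E \<and> {x0, z0} \<in> Gedges E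
     \<and> x0 \<noteq> y0 \<and> x0 \<noteq> z0 \<and> y0 \<noteq> z0"
proof (cases "\<exists>p c. (p, c) \<in> E \<and> p \<noteq> r")
  case True
  then obtain p c where pc: "(p, c) \<in> E" "p \<noteq> r" by blast
  have "p \<in> V - {r}" using rt_sub[OF t pc(1)] pc(2) by simp
  then obtain g where gp: "(g, p) \<in> E" using t unfolding rooted_tree_def by blast
  have adm: "admissible V E {g, p, c}" using adm3[OF t gp pc(1)] by simp
  have d1: "p \<noteq> g" using gp rt_noloop[OF t] by blast
  have d2: "p \<noteq> c" using pc rt_noloop[OF t] by blast
  have d3: "g \<noteq> c"
  proof
    assume "g = c"
    then have "(p, p) \<in> E\<^sup>+" using gp pc by (meson trancl.simps r_into_trancl)
    then show False using rt_acyc'[OF t] by blast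
  qed
  show ?thesis
    by (rule exI[of _ "{g, p, c}"], rule exI[of _ p], rule exI[of _ g], rule exI[of _ c])
      (use adm d1 d2 d3 Gedge_in[OF gp] Gedge_in[OF pc(1)] in \<open>auto simp: insert_commute\<close>)
next
  case False
  obtain p1 c1 p2 c2 where pc: "e1 = (p1, c1)" "e2 = (p2, c2)" by fastforce
  have p: "p1 = r" "p2 = r" using False e pc by auto
  have c12: "c1 \<noteq> c2" using e pc p by auto
  have rc: "(r, c1) \<in> E" "(r, c2) \<in> E" using e pc p by auto
  have adm: "admissible V E {r, c1, c2}" using adm3[OF t rc(1) rc(2)] by simp
  have d: "r \<noteq> c1" "r \<noteq> c2" using rc rt_noin[OF t] by blast+
  show ?thesis
    by (rule exI[of _ "{r, c1, c2}"], rule exI[of _ r], rule exI[of _ c1], rule exI[of _ c2])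
      (use adm d c12 Gedge_in[OF rc(1)] Gedge_in[OF rc(2)] in auto)
qed

lemma small1:
  assumes t: "rooted_tree V r E" and c: "card V = 1"
  shows "small V E r r"
proof -
  have rV: "r \<in> V" using t by (simp add: rooted_tree_def)
  have V: "V = {r}" using c rV by (metis card_1_singletonE singletonD)
  have "E = {}"
  proof (rule ccontr)
    assume "E \<noteq> {}"
    then obtain a b where ab: "(a, b) \<in> E" by auto
    then have "b = r" using rt_sub[OF t ab] V by simp
    then show False using ab rt_noin[OF t] by simp
  qed
  then show ?thesis using V by (simp add: small_def)
qed

lemma finE: "rooted_tree V r E \<Longrightarrow> finite E"
  using rt_EV rt_finite finite_cartesian_product finite_subset by metis

lemma small_le1:
  assumes t: "rooted_tree V r E" and c: "card E \<le> 1"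
  shows "\<exists>w. small V E r w"
proof (cases "E = {}")
  case True
  have "V = {r}"
  proof
    show "{r} \<subseteq> V" using t by (simp add: rooted_tree_def)
    show "V \<subseteq> {r}"
    proof
      fix v assume "v \<in> V"
      then have "(r, v) \<in> E\<^sup>*" by (rule rt_reach[OF t])
      then show "v \<in> {r}" using True by (auto elim: rtranclE)
    qed
  qed
  then show ?thesis using True by (intro exI[of _ r]) (simp add: small_def)
next
  case False
  then have "card E = 1" using c card_0_eq[OF finE[OF t]] by linarith
  then obtain e where Ee: "E = {e}" by (rule card_1_singletonE)
  obtain p w where e: "e = (p, w)" by fastforce
  have pw: "(p, w) \<in> E" using Ee e by simp
  have pr: "p = r"
  proof (rule ccontr)
    assume pr: "p \<noteq> r"
    have "(r, p) \<in> E\<^sup>*" using rt_reach[OF t] rt_sub[OF t pw] by blast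
    then obtain u where "(u, p) \<in> E" using pr by (auto elim: rtranclE)
    then have "(u, p) = (p, w)" using Ee e by simp
    then have "(p, p) \<in> E" using pw by simp
    then show False using rt_noloop[OF t] by blast
  qed
  have rw: "r \<noteq> w" using pw pr rt_noin[OF t] by blast
  have "V = {r, w}"
  proof
    show "{r, w} \<subseteq> V" using rt_sub[OF t pw] pr by simp
    show "V \<subseteq> {r, w}"
    proof
      fix v assume "v \<in> V"
      then have "(r, v) \<in> E\<^sup>*" by (rule rt_reach[OF t])
      then show "v \<in> {r, w}"
      proof (cases rule: rtranclE)
        case (step u) then show ?thesis using Ee e by simp
      qed simp
    qed
  qed
  then show ?thesis using Ee e pr rw by (intro exI[of _ w]) (simp add: small_def)
qed

theorem mainTheorem6:
  fixes V :: "'v set" and r :: 'v and E :: "('v \<times> 'v) set" and P :: "'v \<Rightarrow> 'v \<Rightarrow> bool"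
  assumes "rooted_tree V r E"
  shows "(U_culf_labelled V E \<longleftrightarrow> card V = 1) \<and>
         (U_culf_unlabelled False P V E \<longleftrightarrow> card E \<le> 1) \<and>
         (planar_structure V E P \<longrightarrow> (U_culf_unlabelled True P V E \<longleftrightarrow> card E \<le> 1))"
proof -
  note t = assms
  have L: "U_culf_labelled V E \<longleftrightarrow> card V = 1"
  proof
    assume U: "U_culf_labelled V E"
    show "card V = 1"
    proof (rule ccontr)
      assume c: "card V \<noteq> 1"
      have rV: "r \<in> V" using t by (simp add: rooted_tree_def)
      have "V \<noteq> {r}" using c by auto
      then obtain v where v: "v \<in> V" "v \<noteq> r" using rV by blast
      have "(r, v) \<in> E\<^sup>*" by (rule rt_reach[OF t v(1)])
      then obtain c' where "(r, c') \<in> E" using v(2) by (auto elim: converse_rtranclE)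
      then show False using lab_bad[OF t] U by blast
    qed
  next
    assume "card V = 1"
    then show "U_culf_labelled V E" unfolding U_culf_labelled_def by (rule culf_single[OF small1[OF t]])
  qed
  have N: "U_culf_unlabelled pl P V E \<longleftrightarrow> card E \<le> 1" for pl
  proof
    assume U: "U_culf_unlabelled pl P V E"
    show "card E \<le> 1"
    proof (rule ccontr)
      assume c: "\<not> card E \<le> 1"
      then have "E \<noteq> {}" by auto
      then obtain e1 where e1: "e1 \<in> E" by blast
      have "E - {e1} \<noteq> {}"
      proof
        assume "E - {e1} = {}"
        then have "E = {e1}" using e1 by blast
        then show False using c by simp
      qed
      then obtain e2 where e2: "e2 \<in> E" "e2 \<noteq> e1" by blast
      from config[OF t e1 e2(1)] e2(2) obtain S x0 y0 z0 where
        cf: "admissible V E S" "S = {x0, y0, z0}" "{x0, y0} \<in> Gedges E" "{x0, z0} \<in> Gedges E"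
        "x0 \<noteq> y0" "x0 \<noteq> z0" "y0 \<noteq> z0" by metis
      show False using unl_bad[OF t cf] U by blast
    qed
  next
    assume "card E \<le> 1"
    then obtain w where "small V E r w" using small_le1[OF t] by blast
    then show "U_culf_unlabelled pl P V E" by (rule culf_unl_small)
  qed
  show ?thesis using L N by blast
qed


end
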